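(* Let $\preceq$ be the reverse lexicographic order on $k[E_4]$ with $e_1\succ e_2\succ e_3\succ e_4\succ f_{12}\succ f_{13}\succ f_{23}\succ f_{14}\succ f_{24}\succ f_{34}$, and let $M_4=(f_{23}f_{14},\ e_1f_{14},\ e_1f_{13},\ e_2f_{12},\ e_1f_{12})$. Then: (1) the generators of $M_4$ do not involve $e_4$; (2) $M_4\subseteq\mathrm{in}_{\preceq}(Q_4)$; (3) the multigraded Hilbert series of $k[E_4]/M_4$ is $W_4$-invariant; (4) for every $m\in\mathbb{N}$ and all $a_1,\dots,a_4$ sufficiently large, $\dim_k\bigl(k[E_4]/M_4\bigr)_{m\ell+\sum_ia_ie_i}=\binom{m+2}{2}$.
   Context: $X_4$ is the blow up of $\mathbb{P}^2$ at four points in general position (no three collinear). $\mathrm{Pic}(X_4)$ has basis $\ell,e_1,\dots,e_4$ with $\ell^2=1$, $\ell\cdot e_j=0$, $e_i\cdot e_j=-\delta_{ij}$, $K=-3\ell+\sum e_i$. The exceptional curve classes (classes $E$ with $K\cdot E=E^2=-1$) are the ten classes $e_i$ and $\ell-e_i-e_j$ ($i<j$); $k[E_4]$ is the polynomial ring in variables $e_i$ and $f_{ij}$, $\mathrm{Pic}(X_4)$-graded by $\deg e_i=e_i$, $\deg f_{ij}=\ell-e_i-e_j$. $\mathrm{Cox}(X_4)=\bigoplus_DH^0(\mathcal{O}(D))$ is generated by sections of the $\mathcal{O}(E)$; choosing nonzero sections $s_E$, $C_4$ is the kernel of $k[E_4]\to\mathrm{Cox}(X_4)$, variable of $E\mapsto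 s_E$. A conic class is $D$ with $-K\cdot D=2$, $D^2=0$; $Q_4\subseteq C_4$ is the ideal generated by the pieces $(C_4)_D$, $D$ a conic class. $W_4\subset\mathrm{Aut}(\mathrm{Pic}(X_4))$ is generated by the permutations of $e_1,\dots,e_4$ (fixing $\ell$) and $\sigma$: $\sigma(\ell)=2\ell-e_1-e_2-e_3$, $\sigma(e_1)=\ell-e_2-e_3$, $\sigma(e_2)=\ell-e_1-e_3$, $\sigma(e_3)=\ell-e_1-e_2$, $\sigma(e_4)=e_4$. The multigraded Hilbert series of a graded module $N$ is $\sum_D\dim_k(N_D)t^D$; $g\in W_4$ acts by $g(\sum a_Dt^D)=\sum a_Dt^{g(D)}$, and invariance means $g$ fixes the series for all $g\in W_4$. *)

theory Defs
  imports Main HOL.Vector_Spaces "HOL-Library.Poly_Mapping" "HOL-Library.Product_Plus"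
begin

text \<open>A class D = m l + c1 e1 + c2 e2 + c3 e3 + c4 e4 is the tuple (m, c1, c2, c3, c4).\<close>
type_synonym pic = "int \<times> int \<times> int \<times> int \<times> int"

fun coef :: "pic \<Rightarrow> nat \<Rightarrow> int" where
  "coef (m, a1, a2, a3, a4) i =
     (if i = 0 then m else if i = 1 then a1 else if i = 2 then a2
      else if i = 3 then a3 else if i = 4 then a4 else 0)"

definition mkpic :: "(nat \<Rightarrow> int) \<Rightarrow> pic" where
  "mkpic v = (v 0, v 1, v 2, v 3, v 4)"

fun pscale :: "nat \<Rightarrow> pic \<Rightarrow> pic" where
  "pscale n (m, a1, a2, a3, a4) = (int n * m, int n * a1, int n * a2, int n * a3, int n * a4)"

definition inter :: "pic \<Rightarrow> pic \<Rightarrow> int" where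
  "inter D D' = coef D 0 * coef D' 0 - (\<Sum>i\<in>{1..4::nat}. coef D i * coef D' i)"

definition canK :: pic where "canK = (-3, 1, 1, 1, 1)"

definition conic_class :: "pic \<Rightarrow> bool" where
  "conic_class D \<longleftrightarrow> - inter canK D = 2 \<and> inter D D = 0"

fun sigmaW :: "pic \<Rightarrow> pic" where
  "sigmaW (m, a1, a2, a3, a4) =
     (2*m + a1 + a2 + a3, -m - a2 - a3, -m - a1 - a3, -m - a1 - a2, a4)"

text \<open>The permutation pi of {1..4} acts by e_i |-> e_(pi i); as a map of coordinates
  the coefficient of e_j becomes that of e_(pi^-1 j).  The set of these maps over all
  permutations is the same as the set of maps D |-> mkpic (coef D o pi).\<close>
definition perm_maps :: "(pic \<Rightarrow> pic) set" where
  "perm_maps = {(\<lambda>D. mkpic (\<lambda>i. coef D (\<pi> i))) | \<pi>.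
        bij_betw \<pi> {1..4::nat} {1..4} \<and> (\<forall>i. i \<notin> {1..4} \<longrightarrow> \<pi> i = i)}"

inductive_set W4 :: "(pic \<Rightarrow> pic) set" where
  W4_id: "id \<in> W4"
| W4_step: "g \<in> W4 \<Longrightarrow> h \<in> insert sigmaW perm_maps \<Longrightarrow> h \<circ> g \<in> W4"

datatype ev = E1 | E2 | E3 | E4 | F12 | F13 | F23 | F14 | F24 | F34

definition all_vars :: "ev set" where
  "all_vars = {E1, E2, E3, E4, F12, F13, F23, F14, F24, F34}"

text \<open>Position in the variable order e1 > e2 > e3 > e4 > f12 > f13 > f23 > f14 > f24 > f34
  (smaller index = larger variable).\<close>
fun vidx :: "ev \<Rightarrow> nat" where
  "vidx E1 = 0" | "vidx E2 = 1" | "vidx E3 = 2" | "vidx E4 = 3" | "vidx F12 = 4"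
| "vidx F13 = 5" | "vidx F23 = 6" | "vidx F14 = 7" | "vidx F24 = 8" | "vidx F34 = 9"

fun vdeg :: "ev \<Rightarrow> pic" where
  "vdeg E1 = (0, 1, 0, 0, 0)" | "vdeg E2 = (0, 0, 1, 0, 0)"
| "vdeg E3 = (0, 0, 0, 1, 0)" | "vdeg E4 = (0, 0, 0, 0, 1)"
| "vdeg F12 = (1, -1, -1, 0, 0)" | "vdeg F13 = (1, -1, 0, -1, 0)"
| "vdeg F23 = (1, 0, -1, -1, 0)" | "vdeg F14 = (1, -1, 0, 0, -1)"
| "vdeg F24 = (1, 0, -1, 0, -1)" | "vdeg F34 = (1, 0, 0, -1, -1)"

type_synonym mon = "ev \<Rightarrow>\<^sub>0 nat"
type_synonym 'k kE = "mon \<Rightarrow>\<^sub>0 'k"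

definition mdeg :: "mon \<Rightarrow> pic" where
  "mdeg \<alpha> = (\<Sum>v\<in>all_vars. pscale (Poly_Mapping.lookup \<alpha> v) (vdeg v))"

definition piece :: "pic \<Rightarrow> 'k::field kE set" where
  "piece D = {P. \<forall>\<alpha>\<in>Poly_Mapping.keys P. mdeg \<alpha> = D}"

definition ideal_gen :: "'a::comm_ring_1 set \<Rightarrow> 'a set" where
  "ideal_gen S = module.span (*) S"

definition kscale :: "'k::field \<Rightarrow> 'k kE \<Rightarrow> 'k kE" where
  "kscale c P = Poly_Mapping.single 0 c * P"

definition kdim :: "'k::field kE set \<Rightarrow> nat" where
  "kdim V = vector_space.dim kscale V"

text \<open>dim_k (k[E_4]/N)_D = dim_k k[E_4]_D - dim_k N_D for a homogeneous ideal N.\<close>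
definition hilb_quot :: "'k::field kE set \<Rightarrow> pic \<Rightarrow> nat" where
  "hilb_quot N D = kdim (piece D :: 'k kE set) - kdim (N \<inter> piece D)"

definition tdeg :: "mon \<Rightarrow> nat" where
  "tdeg \<alpha> = (\<Sum>v\<in>all_vars. Poly_Mapping.lookup \<alpha> v)"

definition revlex_less :: "mon \<Rightarrow> mon \<Rightarrow> bool" where
  "revlex_less \<alpha> \<beta> \<longleftrightarrow> tdeg \<alpha> < tdeg \<beta> \<or>
     (tdeg \<alpha> = tdeg \<beta> \<and> (\<exists>v. Poly_Mapping.lookup \<alpha> v > Poly_Mapping.lookup \<beta> v \<and>
        (\<forall>w. vidx w > vidx v \<longrightarrow> Poly_Mapping.lookup \<alpha> w = Poly_Mapping.lookup \<beta> w)))"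

definition lead_mon :: "'k::field kE \<Rightarrow> mon" where
  "lead_mon f = (THE \<alpha>. \<alpha> \<in> Poly_Mapping.keys f \<and> (\<forall>\<beta>\<in>Poly_Mapping.keys f. \<beta> \<noteq> \<alpha> \<longrightarrow> revlex_less \<beta> \<alpha>))"

definition init_ideal :: "'k::field kE set \<Rightarrow> 'k kE set" where
  "init_ideal Q = ideal_gen {Poly_Mapping.single (lead_mon f) 1 | f. f \<in> Q \<and> f \<noteq> 0}"

text \<open>k[x,y,z] with x,y,z the variables 0,1,2.\<close>
type_synonym 'k kxyz = "(nat \<Rightarrow>\<^sub>0 nat) \<Rightarrow>\<^sub>0 'k"

definition homog :: "int \<Rightarrow> 'k::field kxyz set" where
  "homog m = {f. \<forall>\<alpha>\<in>Poly_Mapping.keys f. Poly_Mapping.keys \<alpha> \<subseteq> {0,1,2} \<and> int (Poly_Mapping.lookup \<alpha> 0 + Poly_Mapping.lookup \<alpha> 1 + Poly_Mapping.lookup \<alpha> 2) = m}"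

definition ideal_pow :: "'a::comm_ring_1 set \<Rightarrow> nat \<Rightarrow> 'a set" where
  "ideal_pow I n = ideal_gen {prod_list xs | xs. length xs = n \<and> set xs \<subseteq> I}"

text \<open>Homogeneous ideal of the point [v 0 : v 1 : v 2] of P^2.\<close>
definition point_ideal :: "(nat \<Rightarrow> 'k::field) \<Rightarrow> 'k kxyz set" where
  "point_ideal v = ideal_gen
     {Poly_Mapping.single (Poly_Mapping.single l 1) (v j)
        - Poly_Mapping.single (Poly_Mapping.single j 1) (v l) | j l. j \<in> {0,1,2} \<and> l \<in> {0,1,2}}"

text \<open>H^0(X_4, O(m l - sum a_i e_i)) = forms of degree m vanishing to order >= a_i at p_i.\<close>
definition H0 :: "(nat \<Rightarrow> nat \<Rightarrow> 'k::field) \<Rightarrow> pic \<Rightarrow> 'k kxyz set" where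
  "H0 p D = homog (coef D 0) \<inter>
     {f. \<forall>i\<in>{1..4}. f \<in> ideal_pow (point_ideal (p i)) (nat (- coef D i))}"

text \<open>The Cox ring is the graded ring (+)_D H^0(O(D)), modelled inside pic =>0 k[x,y,z]
  with the convolution product.\<close>
type_synonym 'k coxamb = "pic \<Rightarrow>\<^sub>0 'k kxyz"

definition cox :: "(nat \<Rightarrow> nat \<Rightarrow> 'k::field) \<Rightarrow> 'k coxamb set" where
  "cox p = {F. \<forall>D. Poly_Mapping.lookup F D \<in> H0 p D}"

definition det3 :: "'k::field \<Rightarrow> 'k \<Rightarrow> 'k \<Rightarrow> 'k \<Rightarrow> 'k \<Rightarrow> 'k \<Rightarrow> 'k \<Rightarrow> 'k \<Rightarrow> 'k \<Rightarrow> 'k" where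
  "det3 a b c d e f g h i = a*(e*i - f*h) - b*(d*i - f*g) + c*(d*h - e*g)"

definition general_position :: "(nat \<Rightarrow> nat \<Rightarrow> 'k::field) \<Rightarrow> bool" where
  "general_position p \<longleftrightarrow> (\<forall>i\<in>{1..4}. \<forall>j\<in>{1..4}. \<forall>l\<in>{1..4}. i \<noteq> j \<and> j \<noteq> l \<and> i \<noteq> l \<longrightarrow>
      det3 (p i 0) (p i 1) (p i 2) (p j 0) (p j 1) (p j 2) (p l 0) (p l 1) (p l 2) \<noteq> 0)"

definition sec :: "(ev \<Rightarrow> 'k::field kxyz) \<Rightarrow> ev \<Rightarrow> 'k coxamb" where
  "sec s v = Poly_Mapping.single (vdeg v) (s v)"

definition cox_eval :: "(ev \<Rightarrow> 'k::field kxyz) \<Rightarrow> 'k kE \<Rightarrow> 'k coxamb" where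
  "cox_eval s P = (\<Sum>\<alpha>\<in>Poly_Mapping.keys P. Poly_Mapping.single 0 (Poly_Mapping.single 0 (Poly_Mapping.lookup P \<alpha>))
                      * (\<Prod>v\<in>all_vars. sec s v ^ Poly_Mapping.lookup \<alpha> v))"

definition C4 :: "(ev \<Rightarrow> 'k::field kxyz) \<Rightarrow> 'k kE set" where
  "C4 s = {P. cox_eval s P = 0}"

definition Q4 :: "(ev \<Rightarrow> 'k::field kxyz) \<Rightarrow> 'k kE set" where
  "Q4 s = ideal_gen (\<Union>{C4 s \<inter> piece D | D. conic_class D})"

definition M4_gens :: "mon list" where
  "M4_gens = [Poly_Mapping.single F23 1 + Poly_Mapping.single F14 1,
              Poly_Mapping.single E1 1 + Poly_Mapping.single F14 1,
              Poly_Mapping.single E1 1 + Poly_Mapping.single F13 1,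
              Poly_Mapping.single E2 1 + Poly_Mapping.single F12 1,
              Poly_Mapping.single E1 1 + Poly_Mapping.single F12 1]"

definition M4 :: "'k::field kE set" where
  "M4 = ideal_gen ((\<lambda>\<alpha>. Poly_Mapping.single \<alpha> 1) ` set M4_gens)"

end

theory Submission
  imports Defs
begin


lemma module_times: "module ((*) :: 'a::comm_ring_1 \<Rightarrow> 'a \<Rightarrow> 'a)"
  by standard (auto simp: algebra_simps)

lemma lookup_kscale: "Poly_Mapping.lookup (kscale c P) \<alpha> = c * Poly_Mapping.lookup P \<alpha>"
  unfolding kscale_def mult_map_scale_conv_mult[symmetric]
  by (simp add: Poly_Mapping.map.rep_eq when_def)

lemma single_one_inj [simp]: "Poly_Mapping.single x (1::'k::zero_neq_one) = Poly_Mapping.single y 1 \<longleftrightarrow> x = y"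
  by (metis lookup_single_eq lookup_single_not_eq zero_neq_one)

lemma kscale_eqI: "kscale c P = Poly_Mapping.Abs_poly_mapping (\<lambda>\<alpha>. c * Poly_Mapping.lookup P \<alpha>)"
  by (rule poly_mapping_eqI) (simp add: lookup_kscale)

interpretation kv: vector_space "kscale :: 'k::field \<Rightarrow> 'k kE \<Rightarrow> 'k kE"
  by standard (auto intro!: poly_mapping_eqI simp: lookup_kscale lookup_add algebra_simps)

lemma kdim_kv: "kdim V = kv.dim V"
  by (simp add: kdim_def)

lemma kscale_single: "kscale c (Poly_Mapping.single \<alpha> d) = Poly_Mapping.single \<alpha> (c * d)"
  by (rule poly_mapping_eqI) (simp add: lookup_kscale lookup_single when_def)

lemma pm_expand: "(P :: 'k::field kE) = (\<Sum>\<alpha>\<in>Poly_Mapping.keys P. kscale (Poly_Mapping.lookup P \<alpha>) (Poly_Mapping.single \<alpha> 1))"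
proof (rule poly_mapping_eqI)
  fix \<beta>
  have "(\<Sum>\<alpha>\<in>Poly_Mapping.keys P. Poly_Mapping.lookup (kscale (Poly_Mapping.lookup P \<alpha>) (Poly_Mapping.single \<alpha> 1)) \<beta>)
     = (\<Sum>\<alpha>\<in>Poly_Mapping.keys P. if \<alpha> = \<beta> then Poly_Mapping.lookup P \<beta> else 0)"
    by (rule sum.cong) (auto simp: lookup_kscale lookup_single when_def)
  also have "\<dots> = Poly_Mapping.lookup P \<beta>"
    by (simp add: in_keys_iff)
  finally show "Poly_Mapping.lookup P \<beta> = Poly_Mapping.lookup (\<Sum>\<alpha>\<in>Poly_Mapping.keys P. kscale (Poly_Mapping.lookup P \<alpha>) (Poly_Mapping.single \<alpha> 1)) \<beta>"
    by (simp add: lookup_sum)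
qed

lemma indep_monos: "kv.independent ((\<lambda>\<alpha>. Poly_Mapping.single \<alpha> (1::'k::field)) ` A)"
  unfolding kv.independent_explicit_module
proof (intro allI impI)
  fix t u v
  assume t: "finite t" "t \<subseteq> (\<lambda>\<alpha>. Poly_Mapping.single \<alpha> (1::'k)) ` A"
    and s: "(\<Sum>v\<in>t. kscale (u v) v) = 0" and v: "v \<in> t"
  from v t obtain \<alpha> where va: "v = Poly_Mapping.single \<alpha> 1" by auto
  have "0 = Poly_Mapping.lookup (\<Sum>v\<in>t. kscale (u v) v) \<alpha>" using s by simp
  also have "\<dots> = (\<Sum>w\<in>t. if w = v then u v else 0)"
    unfolding lookup_sum
  proof (rule sum.cong)
    fix w assume "w \<in> t"
    then obtain \<beta> where wb: "w = Poly_Mapping.single \<beta> 1" using t by auto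
    show "Poly_Mapping.lookup (kscale (u w) w) \<alpha> = (if w = v then u v else 0)"
      using va wb by (auto simp: lookup_kscale lookup_single when_def)
  qed simp
  also have "\<dots> = u v" using v t(1) by simp
  finally show "u v = 0" by simp
qed

lemma kdim_keys: "kdim {P :: 'k::field kE. Poly_Mapping.keys P \<subseteq> A} = card A"
proof -
  let ?B = "(\<lambda>\<alpha>. Poly_Mapping.single \<alpha> (1::'k)) ` A"
  have "card ?B = kv.dim {P :: 'k kE. Poly_Mapping.keys P \<subseteq> A}"
  proof (rule kv.basis_card_eq_dim)
    show "?B \<subseteq> {P. Poly_Mapping.keys P \<subseteq> A}" by auto
    show "kv.independent ?B" by (rule indep_monos)
    show "{P. Poly_Mapping.keys P \<subseteq> A} \<subseteq> kv.span ?B"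
    proof
      fix P :: "'k kE" assume "P \<in> {P. Poly_Mapping.keys P \<subseteq> A}"
      then have kA: "Poly_Mapping.keys P \<subseteq> A" by simp
      have "(\<Sum>\<alpha>\<in>Poly_Mapping.keys P. kscale (Poly_Mapping.lookup P \<alpha>) (Poly_Mapping.single \<alpha> 1)) \<in> kv.span ?B"
        by (rule kv.span_sum, rule kv.span_scale, rule kv.span_base) (use kA in auto)
      then show "P \<in> kv.span ?B" using pm_expand[of P] by simp
    qed
  qed
  moreover have "card ?B = card A"
    by (rule card_image) (auto simp: inj_on_def)
  ultimately show ?thesis by (simp add: kdim_kv)
qed

abbreviation lk :: "mon \<Rightarrow> ev \<Rightarrow> nat" where "lk \<equiv> Poly_Mapping.lookup"

lemma UNIV_ev: "(UNIV :: ev set) = all_vars"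
  unfolding all_vars_def by (rule set_eqI, case_tac x) auto

instance ev :: finite
  by standard (simp add: UNIV_ev all_vars_def)

definition std :: "mon \<Rightarrow> bool" where
  "std \<alpha> \<longleftrightarrow> \<not>(1 \<le> lk \<alpha> F23 \<and> 1 \<le> lk \<alpha> F14) \<and> \<not>(1 \<le> lk \<alpha> E1 \<and> 1 \<le> lk \<alpha> F14)
     \<and> \<not>(1 \<le> lk \<alpha> E1 \<and> 1 \<le> lk \<alpha> F13) \<and> \<not>(1 \<le> lk \<alpha> E2 \<and> 1 \<le> lk \<alpha> F12)
     \<and> \<not>(1 \<le> lk \<alpha> E1 \<and> 1 \<le> lk \<alpha> F12)"

lemma nonstd_up: "\<not> std \<beta> \<Longrightarrow> \<not> std (\<alpha> + \<beta>)"
  unfolding std_def by (auto simp: lookup_add)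

lemma nonstd_gen: "\<not> std \<alpha> \<Longrightarrow> \<exists>g\<in>set M4_gens. \<forall>v. lk g v \<le> lk \<alpha> v"
  unfolding std_def M4_gens_def
  by (auto simp: lookup_add lookup_single when_def)

lemma gens_nonstd: "g \<in> set M4_gens \<Longrightarrow> \<not> std g"
  unfolding std_def M4_gens_def
  by (auto simp: lookup_add lookup_single when_def)

lemma pm_split: "(\<forall>v. lk g v \<le> lk \<alpha> v) \<Longrightarrow> \<alpha> = (\<alpha> - g) + g"
  by (rule poly_mapping_eqI) (simp add: lookup_add lookup_minus)

lemma M4_char: "(M4 :: 'k::field kE set) = {P. \<forall>\<alpha>\<in>Poly_Mapping.keys P. \<not> std \<alpha>}"
proof
  let ?T = "{P :: 'k kE. \<forall>\<alpha>\<in>Poly_Mapping.keys P. \<not> std \<alpha>}"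
  show "M4 \<subseteq> ?T"
    unfolding M4_def ideal_gen_def
  proof (rule module.span_minimal[OF module_times])
    show "(\<lambda>\<alpha>. Poly_Mapping.single \<alpha> 1) ` set M4_gens \<subseteq> ?T"
      using gens_nonstd by auto
    show "module.subspace (*) ?T"
      unfolding module.subspace_def[OF module_times]
    proof (intro conjI ballI allI)
      show "0 \<in> ?T" by simp
      fix x y assume "x \<in> ?T" "y \<in> ?T"
      then show "x + y \<in> ?T" using keys_add[of x y] by auto
    next
      fix c x assume x: "x \<in> ?T"
      have "\<forall>\<alpha>\<in>Poly_Mapping.keys (c * x). \<not> std \<alpha>"
      proof
        fix \<alpha> assume "\<alpha> \<in> Poly_Mapping.keys (c * x)"
        then obtain a b where "\<alpha> = a + b" "b \<in> Poly_Mapping.keys x" using keys_mult[of c x] by auto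
        then show "\<not> std \<alpha>" using x nonstd_up by auto
      qed
      then show "c * x \<in> ?T" by simp
    qed
  qed
  show "?T \<subseteq> M4"
  proof
    fix P :: "'k kE" assume P: "P \<in> ?T"
    have "(\<Sum>\<alpha>\<in>Poly_Mapping.keys P. kscale (Poly_Mapping.lookup P \<alpha>) (Poly_Mapping.single \<alpha> 1)) \<in> M4"
      unfolding M4_def ideal_gen_def
    proof (rule module.span_sum[OF module_times])
      fix \<alpha> assume a: "\<alpha> \<in> Poly_Mapping.keys P"
      then obtain g where g: "g \<in> set M4_gens" "\<forall>v. lk g v \<le> lk \<alpha> v" using P nonstd_gen by blast
      have "kscale (Poly_Mapping.lookup P \<alpha>) (Poly_Mapping.single \<alpha> 1)
          = Poly_Mapping.single (\<alpha> - g) (Poly_Mapping.lookup P \<alpha>) * Poly_Mapping.single g 1"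
        using pm_split[OF g(2)] by (simp add: kscale_single mult_single)
      moreover have "Poly_Mapping.single (\<alpha> - g) (Poly_Mapping.lookup P \<alpha>) * Poly_Mapping.single g (1::'k)
          \<in> module.span (*) ((\<lambda>\<alpha>. Poly_Mapping.single \<alpha> 1) ` set M4_gens)"
        by (rule module.span_scale[OF module_times], rule module.span_base[OF module_times]) (use g in auto)
      ultimately show "kscale (Poly_Mapping.lookup P \<alpha>) (Poly_Mapping.single \<alpha> 1)
          \<in> module.span (*) ((\<lambda>\<alpha>. Poly_Mapping.single \<alpha> (1::'k)) ` set M4_gens)" by simp
    qed
    then show "P \<in> M4" using pm_expand[of P] by simp
  qed
qed

definition mons :: "pic \<Rightarrow> mon set" where "mons D = {\<alpha>. mdeg \<alpha> = D}"

lemma mdeg_eq: "mdeg \<alpha> = (int (lk \<alpha> F12) + int (lk \<alpha> F13) + int (lk \<alpha> F23) + int (lk \<alpha> F14) + int (lk \<alpha> F24) + int (lk \<alpha> F34),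
   int (lk \<alpha> E1) - int (lk \<alpha> F12) - int (lk \<alpha> F13) - int (lk \<alpha> F14),
   int (lk \<alpha> E2) - int (lk \<alpha> F12) - int (lk \<alpha> F23) - int (lk \<alpha> F24),
   int (lk \<alpha> E3) - int (lk \<alpha> F13) - int (lk \<alpha> F23) - int (lk \<alpha> F34),
   int (lk \<alpha> E4) - int (lk \<alpha> F14) - int (lk \<alpha> F24) - int (lk \<alpha> F34))"
  unfolding mdeg_def all_vars_def by simp

lemma finite_bounded_mons: "finite {\<alpha> :: mon. \<forall>v. lk \<alpha> v \<le> B}"
proof -
  have "finite {f :: ev \<Rightarrow> nat. \<forall>x. (x \<in> UNIV \<longrightarrow> f x \<in> {..B}) \<and> (x \<notin> UNIV \<longrightarrow> f x = 0)}"
    by (rule finite_set_of_finite_funs) auto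
  then have "finite (Poly_Mapping.Abs_poly_mapping ` {f :: ev \<Rightarrow> nat. \<forall>x. (x \<in> UNIV \<longrightarrow> f x \<in> {..B}) \<and> (x \<notin> UNIV \<longrightarrow> f x = 0)})"
    by simp
  moreover have "{\<alpha> :: mon. \<forall>v. lk \<alpha> v \<le> B} \<subseteq> Poly_Mapping.Abs_poly_mapping ` {f :: ev \<Rightarrow> nat. \<forall>x. (x \<in> UNIV \<longrightarrow> f x \<in> {..B}) \<and> (x \<notin> UNIV \<longrightarrow> f x = 0)}"
  proof
    fix \<alpha> :: mon assume "\<alpha> \<in> {\<alpha>. \<forall>v. lk \<alpha> v \<le> B}"
    then show "\<alpha> \<in> Poly_Mapping.Abs_poly_mapping ` {f :: ev \<Rightarrow> nat. \<forall>x. (x \<in> UNIV \<longrightarrow> f x \<in> {..B}) \<and> (x \<notin> UNIV \<longrightarrow> f x = 0)}"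
      by (intro image_eqI[of _ _ "lk \<alpha>"]) (auto simp: lookup_inverse)
  qed
  ultimately show ?thesis by (rule finite_subset[rotated])
qed

lemma finite_mons: "finite (mons D)"
proof -
  obtain m a1 a2 a3 a4 where D: "D = (m, a1, a2, a3, a4)" by (cases D) auto
  define B where "B = nat (\<bar>m\<bar> + \<bar>a1\<bar> + \<bar>a2\<bar> + \<bar>a3\<bar> + \<bar>a4\<bar>)"
  have "mons D \<subseteq> {\<alpha> :: mon. \<forall>v. lk \<alpha> v \<le> B}"
  proof (safe)
    fix \<alpha> v assume "\<alpha> \<in> mons D"
    then have e: "mdeg \<alpha> = D" by (simp add: mons_def)
    have c: "int (lk \<alpha> F12) + int (lk \<alpha> F13) + int (lk \<alpha> F23) + int (lk \<alpha> F14) + int (lk \<alpha> F24) + int (lk \<alpha> F34) = m"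
      "int (lk \<alpha> E1) - int (lk \<alpha> F12) - int (lk \<alpha> F13) - int (lk \<alpha> F14) = a1"
      "int (lk \<alpha> E2) - int (lk \<alpha> F12) - int (lk \<alpha> F23) - int (lk \<alpha> F24) = a2"
      "int (lk \<alpha> E3) - int (lk \<alpha> F13) - int (lk \<alpha> F23) - int (lk \<alpha> F34) = a3"
      "int (lk \<alpha> E4) - int (lk \<alpha> F14) - int (lk \<alpha> F24) - int (lk \<alpha> F34) = a4"
      using e unfolding D mdeg_eq by simp_all
    have "int (lk \<alpha> v) \<le> \<bar>m\<bar> + \<bar>a1\<bar> + \<bar>a2\<bar> + \<bar>a3\<bar> + \<bar>a4\<bar>"
      using c by (cases v) (hypsubst, linarith)+
    then show "lk \<alpha> v \<le> B" unfolding B_def by linarith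
  qed
  then show ?thesis using finite_bounded_mons finite_subset by blast
qed

lemma piece_keys: "piece D = {P. Poly_Mapping.keys P \<subseteq> mons D}"
  unfolding piece_def mons_def by auto

lemma hilb_card: "hilb_quot (M4 :: 'k::field kE set) D = card {\<alpha> \<in> mons D. std \<alpha>}"
proof -
  have "(M4 :: 'k kE set) \<inter> piece D = {P. Poly_Mapping.keys P \<subseteq> mons D \<inter> {\<alpha>. \<not> std \<alpha>}}"
    unfolding M4_char piece_keys by auto
  then have e2: "kdim ((M4 :: 'k kE set) \<inter> piece D) = card (mons D \<inter> {\<alpha>. \<not> std \<alpha>})"
    by (simp only: kdim_keys)
  have e1: "kdim (piece D :: 'k kE set) = card (mons D)"
    by (simp only: piece_keys kdim_keys)
  have "hilb_quot (M4 :: 'k kE set) D = card (mons D) - card (mons D \<inter> {\<alpha>. \<not> std \<alpha>})"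
    unfolding hilb_quot_def e1 e2 ..
  also have "\<dots> = card (mons D - mons D \<inter> {\<alpha>. \<not> std \<alpha>})"
    by (rule card_Diff_subset[symmetric]) (use finite_mons in auto)
  also have "mons D - mons D \<inter> {\<alpha>. \<not> std \<alpha>} = {\<alpha> \<in> mons D. std \<alpha>}" by auto
  finally show ?thesis .
qed



lemma mdeg_add: "mdeg (\<alpha> + \<beta>) = mdeg \<alpha> + mdeg \<beta>"
  unfolding mdeg_eq by (simp add: lookup_add)

definition ind :: "ev set \<Rightarrow> mon" where
  "ind S = Poly_Mapping.Abs_poly_mapping (\<lambda>v. if v \<in> S then 1 else 0)"

lemma lk_ind: "lk (ind S) v = (if v \<in> S then 1 else 0)"
  unfolding ind_def by (subst lookup_Abs_poly_mapping) auto

definition cnt :: "pic \<Rightarrow> ev set list \<Rightarrow> ev set \<Rightarrow> nat" where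
  "cnt D Vs R = card {\<alpha>. mdeg \<alpha> = D \<and> (\<forall>v\<in>R. 1 \<le> lk \<alpha> v) \<and> (\<forall>V\<in>set Vs. \<not>(\<forall>v\<in>V. 1 \<le> lk \<alpha> v))}"

lemma cnt_step: "int (cnt D (V # Vs) R) = int (cnt D Vs R) - int (cnt D Vs (V \<union> R))"
proof -
  let ?A = "{\<alpha>. mdeg \<alpha> = D \<and> (\<forall>v\<in>R. 1 \<le> lk \<alpha> v) \<and> (\<forall>V\<in>set Vs. \<not>(\<forall>v\<in>V. 1 \<le> lk \<alpha> v))}"
  let ?B = "{\<alpha>. mdeg \<alpha> = D \<and> (\<forall>v\<in>V \<union> R. 1 \<le> lk \<alpha> v) \<and> (\<forall>V\<in>set Vs. \<not>(\<forall>v\<in>V. 1 \<le> lk \<alpha> v))}"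
  let ?C = "{\<alpha>. mdeg \<alpha> = D \<and> (\<forall>v\<in>R. 1 \<le> lk \<alpha> v) \<and> (\<forall>V\<in>set (V # Vs). \<not>(\<forall>v\<in>V. 1 \<le> lk \<alpha> v))}"
  have fA: "finite ?A" by (rule finite_subset[OF _ finite_mons[of D]]) (auto simp: mons_def)
  have BA: "?B \<subseteq> ?A" by auto
  have "?C = ?A - ?B" by auto
  then have "card ?C = card ?A - card ?B" using card_Diff_subset[OF finite_subset[OF BA fA] BA] by simp
  moreover have "card ?B \<le> card ?A" by (rule card_mono[OF fA BA])
  ultimately show ?thesis unfolding cnt_def by simp
qed

lemma cnt_base: "cnt D [] R = card (mons (D - mdeg (ind R)))"
proof -
  let ?A = "{\<alpha>. mdeg \<alpha> = D \<and> (\<forall>v\<in>R. 1 \<le> lk \<alpha> v) \<and> (\<forall>V\<in>set []. \<not>(\<forall>v\<in>V. 1 \<le> lk \<alpha> v))}"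
  have "?A = (\<lambda>\<beta>. \<beta> + ind R) ` mons (D - mdeg (ind R))"
  proof (rule set_eqI, rule iffI)
    fix \<alpha> assume a: "\<alpha> \<in> ?A"
    have le: "\<forall>v. lk (ind R) v \<le> lk \<alpha> v" using a by (auto simp: lk_ind)
    have e: "\<alpha> = (\<alpha> - ind R) + ind R" by (rule pm_split[OF le])
    have "mdeg (\<alpha> - ind R) = D - mdeg (ind R)"
      using a mdeg_add[of "\<alpha> - ind R" "ind R"] e by (simp add: algebra_simps)
    then show "\<alpha> \<in> (\<lambda>\<beta>. \<beta> + ind R) ` mons (D - mdeg (ind R))"
      using e by (intro image_eqI[of _ _ "\<alpha> - ind R"]) (auto simp: mons_def)
  next
    fix \<alpha> assume "\<alpha> \<in> (\<lambda>\<beta>. \<beta> + ind R) ` mons (D - mdeg (ind R))"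
    then obtain \<beta> where b: "\<alpha> = \<beta> + ind R" "mdeg \<beta> = D - mdeg (ind R)" by (auto simp: mons_def)
    then show "\<alpha> \<in> ?A" by (auto simp: mdeg_add lookup_add lk_ind)
  qed
  moreover have "inj_on (\<lambda>\<beta>. \<beta> + ind R) (mons (D - mdeg (ind R)))"
    by (auto simp: inj_on_def)
  ultimately show ?thesis unfolding cnt_def by (simp add: card_image)
qed

definition PP :: "pic \<Rightarrow> int" where "PP D = int (card (mons D))"
definition NN :: "pic \<Rightarrow> int" where "NN D = int (card {\<alpha> \<in> mons D. std \<alpha>})"

lemma NN_cnt: "NN D = int (cnt D [{F23, F14}, {E1, F14}, {E1, F13}, {E2, F12}, {E1, F12}] {})"
  unfolding NN_def cnt_def mons_def std_def by (intro arg_cong[where f="\<lambda>x. int (card x)"] Collect_cong) auto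

definition Con5 :: "pic set" where
  "Con5 = {(1,-1,0,0,0), (1,0,-1,0,0), (1,0,0,-1,0), (1,0,0,0,-1), (2,-1,-1,-1,-1)}"

definition nK :: pic where "nK = (3,-1,-1,-1,-1)"

lemma NN_formula: "NN D = PP D - (\<Sum>c\<in>Con5. PP (D - c)) + (\<Sum>c\<in>Con5. PP (D - (nK - c))) - PP (D - nK)"
proof -
  obtain m a1 a2 a3 a4 where D: "D = (m, a1, a2, a3, a4)" by (cases D) auto
  show ?thesis
    unfolding NN_cnt cnt_step
    unfolding cnt_base PP_def[symmetric] Con5_def nK_def D
    by (simp add: mdeg_eq lk_ind)
qed

lemma inter_eq: "inter (m, a1, a2, a3, a4) (n, b1, b2, b3, b4) = m*n - a1*b1 - a2*b2 - a3*b3 - a4*b4"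
proof -
  have "{1..4::nat} = {1,2,3,4}" by auto
  then show ?thesis unfolding inter_def by simp
qed

lemma sq4: "((a::int)+b+c+d)*(a+b+c+d) \<le> 4*(a*a+b*b+c*c+d*d)"
proof -
  have "0 \<le> (a-b)*(a-b) + (a-c)*(a-c) + (a-d)*(a-d) + (b-c)*(b-c) + (b-d)*(b-d) + (c-d)*(c-d)"
    by (intro add_nonneg_nonneg) simp_all
  moreover have "4*(a*a+b*b+c*c+d*d) - (a+b+c+d)*(a+b+c+d) = (a-b)*(a-b) + (a-c)*(a-c) + (a-d)*(a-d) + (b-c)*(b-c) + (b-d)*(b-d) + (c-d)*(c-d)"
    by algebra
  ultimately show ?thesis by linarith
qed

lemma int_prod_m1: "0 \<le> (x::int) * (x - 1)"
  by (cases "x \<le> 0") (auto intro: mult_nonpos_nonpos mult_nonneg_nonneg)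

lemma int_prod_p1: "0 \<le> (x::int) * (x + 1)"
  by (cases "x \<le> -1") (auto intro: mult_nonpos_nonpos mult_nonneg_nonneg)

lemma int_prod_m1_0: "(x::int) * (x - 1) = 0 \<Longrightarrow> x = 0 \<or> x = 1" by auto
lemma int_prod_p1_0: "(x::int) * (x + 1) = 0 \<Longrightarrow> x = 0 \<or> x = -1" by auto

lemma range_vdeg: "range vdeg = {(0,1,0,0,0), (0,0,1,0,0), (0,0,0,1,0), (0,0,0,0,1),
   (1,-1,-1,0,0), (1,-1,0,-1,0), (1,0,-1,-1,0), (1,-1,0,0,-1), (1,0,-1,0,-1), (1,0,0,-1,-1)}"
  unfolding UNIV_ev all_vars_def by simp

lemma exc_char:
  assumes "inter D D = -1" "inter canK D = -1"
  shows "D \<in> range vdeg"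
proof -
  obtain m a b c d where D: "D = (m, a, b, c, d)" by (cases D) auto
  have h1: "m*m - a*a - b*b - c*c - d*d = -1" and h2: "a + b + c + d = 1 - 3*m"
    using assms unfolding D canK_def inter_eq by simp_all
  have s: "(1 - 3*m)*(1 - 3*m) \<le> 4*(m*m + 1)" using sq4[of a b c d] h1 h2 by simp
  then have s': "5*(m*m) \<le> 6*m + 3" by (simp add: algebra_simps)
  have m01: "m = 0 \<or> m = 1"
  proof (rule ccontr)
    assume "\<not> (m = 0 \<or> m = 1)"
    then consider "m \<ge> 2" | "m \<le> -1" by linarith
    then show False
    proof cases
      case 1 then have "m*m \<ge> 2*m" by (simp add: mult_right_mono)
      then show False using s' 1 by linarith
    next
      case 2 then have "(-m)*(-m) \<ge> (-m)*1" by (intro mult_left_mono) auto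
      then have "m*m \<ge> -m" by simp
      then show False using s' 2 by linarith
    qed
  qed
  then show ?thesis
  proof
    assume m: "m = 0"
    then have "a*(a-1) + b*(b-1) + c*(c-1) + d*(d-1) = 0" using h1 h2 by (simp add: algebra_simps)
    then have "a*(a-1) = 0" "b*(b-1) = 0" "c*(c-1) = 0" "d*(d-1) = 0"
      using int_prod_m1[of a] int_prod_m1[of b] int_prod_m1[of c] int_prod_m1[of d] by linarith+
    then have "(a = 0 \<or> a = 1)" "(b = 0 \<or> b = 1)" "(c = 0 \<or> c = 1)" "(d = 0 \<or> d = 1)"
      using int_prod_m1_0 by blast+
    then show ?thesis using h2 m unfolding D range_vdeg by (elim disjE) simp_all
  next
    assume m: "m = 1"
    then have "a*(a+1) + b*(b+1) + c*(c+1) + d*(d+1) = 0" using h1 h2 by (simp add: algebra_simps)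
    then have "a*(a+1) = 0" "b*(b+1) = 0" "c*(c+1) = 0" "d*(d+1) = 0"
      using int_prod_p1[of a] int_prod_p1[of b] int_prod_p1[of c] int_prod_p1[of d] by linarith+
    then have "(a = 0 \<or> a = -1)" "(b = 0 \<or> b = -1)" "(c = 0 \<or> c = -1)" "(d = 0 \<or> d = -1)"
      using int_prod_p1_0 by blast+
    then show ?thesis using h2 m unfolding D range_vdeg by (elim disjE) simp_all
  qed
qed

lemma con_char: "conic_class D \<longleftrightarrow> D \<in> Con5"
proof
  assume "D \<in> Con5" then show "conic_class D"
    unfolding Con5_def conic_class_def canK_def by (auto simp: inter_eq)
next
  assume "conic_class D"
  obtain m a b c d where D: "D = (m, a, b, c, d)" by (cases D) auto
  have h1: "m*m - a*a - b*b - c*c - d*d = 0" and h2: "a + b + c + d = 2 - 3*m"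
    using \<open>conic_class D\<close> unfolding D canK_def conic_class_def inter_eq by simp_all
  have s: "(2 - 3*m)*(2 - 3*m) \<le> 4*(m*m)" using sq4[of a b c d] h1 h2 by simp
  then have s': "5*(m*m) + 4 \<le> 12*m" by (simp add: algebra_simps)
  have m12: "m = 1 \<or> m = 2"
  proof (rule ccontr)
    assume "\<not> (m = 1 \<or> m = 2)"
    then consider "m \<ge> 3" | "m \<le> 0" by linarith
    then show False
    proof cases
      case 1 then have "m*m \<ge> 3*m" by (simp add: mult_right_mono)
      then show False using s' 1 by linarith
    next
      case 2 then have "m*m \<ge> 0" by simp
      then show False using s' 2 by linarith
    qed
  qed
  then show "D \<in> Con5"
  proof
    assume m: "m = 1"
    then have "a*(a+1) + b*(b+1) + c*(c+1) + d*(d+1) = 0" using h1 h2 by (simp add: algebra_simps)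
    then have "a*(a+1) = 0" "b*(b+1) = 0" "c*(c+1) = 0" "d*(d+1) = 0"
      using int_prod_p1[of a] int_prod_p1[of b] int_prod_p1[of c] int_prod_p1[of d] by linarith+
    then have "(a = 0 \<or> a = -1)" "(b = 0 \<or> b = -1)" "(c = 0 \<or> c = -1)" "(d = 0 \<or> d = -1)"
      using int_prod_p1_0 by blast+
    then show ?thesis using h2 m unfolding D Con5_def by (elim disjE) simp_all
  next
    assume m: "m = 2"
    then have "(a+1)*(a+1) + (b+1)*(b+1) + (c+1)*(c+1) + (d+1)*(d+1) = 0" using h1 h2 by (simp add: algebra_simps)
    moreover have "0 \<le> (a+1)*(a+1)" "0 \<le> (b+1)*(b+1)" "0 \<le> (c+1)*(c+1)" "0 \<le> (d+1)*(d+1)" by simp_all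
    ultimately have "(a+1)*(a+1) = 0" "(b+1)*(b+1) = 0" "(c+1)*(c+1) = 0" "(d+1)*(d+1) = 0" by linarith+
    then have "a = -1" "b = -1" "c = -1" "d = -1" by simp_all
    then show ?thesis using m unfolding D Con5_def by auto
  qed
qed

lemma pscale_0: "pscale 0 x = 0"
  by (cases x) (simp add: zero_prod_def)

lemma pscale_Suc: "pscale (Suc n) x = x + pscale n x"
  by (cases x) (simp add: algebra_simps)

lemma inj_vdeg: "inj vdeg"
  unfolding inj_def by (intro allI, case_tac x; case_tac y; simp)

lemma mdeg_UNIV: "mdeg \<alpha> = (\<Sum>v\<in>UNIV. pscale (lk \<alpha> v) (vdeg v))"
  unfolding mdeg_def UNIV_ev ..

lemma nK_canK: "nK = - canK"
  unfolding nK_def canK_def by simp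

locale isom =
  fixes g :: "pic \<Rightarrow> pic"
  assumes g_add: "\<And>x y. g (x + y) = g x + g y"
    and g_inj: "inj g"
    and g_inter: "\<And>x y. inter (g x) (g y) = inter x y"
    and g_K: "g canK = canK"
begin

lemma g_0: "g 0 = 0"
  using g_add[of 0 0] by simp

lemma g_minus: "g (- x) = - g x"
  using g_add[of x "-x"] g_0 minus_unique[of "g x" "g (-x)"] by simp

lemma g_diff: "g (x - y) = g x - g y"
  using g_add[of x "-y"] g_minus[of y] by simp

lemma g_pscale: "g (pscale n x) = pscale n (g x)"
  by (induction n) (simp_all add: pscale_0 pscale_Suc g_0 g_add)

lemma g_sum: "g (sum f A) = (\<Sum>a\<in>A. g (f a))"
  by (induction A rule: infinite_finite_induct) (simp_all add: g_0 g_add)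

lemma g_nK: "g nK = nK"
  unfolding nK_canK g_minus g_K ..

lemma g_vdeg: "\<exists>w. vdeg w = g (vdeg v)"
proof -
  have "inter (g (vdeg v)) (g (vdeg v)) = -1"
    unfolding g_inter by (cases v) (simp_all add: inter_eq)
  moreover have "inter canK (g (vdeg v)) = -1"
    unfolding arg_cong[where f="\<lambda>x. inter x (g (vdeg v))", OF g_K, symmetric] g_inter by (cases v) (simp_all add: inter_eq canK_def)
  ultimately show ?thesis using exc_char by (metis rangeE)
qed

definition tau :: "ev \<Rightarrow> ev" where "tau v = (SOME w. vdeg w = g (vdeg v))"

lemma tau: "vdeg (tau v) = g (vdeg v)"
  unfolding tau_def using g_vdeg[of v] by (rule someI_ex)

lemma inj_tau: "inj tau"
proof (rule injI)
  fix v w assume "tau v = tau w"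
  then have "g (vdeg v) = g (vdeg w)" using tau by metis
  then show "v = w" using g_inj inj_vdeg by (simp add: inj_eq)
qed

lemma bij_tau: "bij tau"
  using inj_tau by (simp add: bij_def finite_UNIV_inj_surj)

definition Phi :: "mon \<Rightarrow> mon" where
  "Phi \<alpha> = Poly_Mapping.Abs_poly_mapping (\<lambda>w. lk \<alpha> (inv tau w))"

lemma lk_Phi: "lk (Phi \<alpha>) w = lk \<alpha> (inv tau w)"
  unfolding Phi_def by (subst lookup_Abs_poly_mapping) auto

lemma mdeg_Phi: "mdeg (Phi \<alpha>) = g (mdeg \<alpha>)"
proof -
  have "mdeg (Phi \<alpha>) = (\<Sum>w\<in>UNIV. pscale (lk \<alpha> (inv tau w)) (vdeg w))"
    unfolding mdeg_UNIV lk_Phi ..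
  also have "\<dots> = (\<Sum>w\<in>tau ` UNIV. pscale (lk \<alpha> (inv tau w)) (vdeg w))"
    using bij_tau by (simp add: bij_def)
  also have "\<dots> = (\<Sum>v\<in>UNIV. pscale (lk \<alpha> (inv tau (tau v))) (vdeg (tau v)))"
    by (rule sum.reindex[OF inj_on_subset[OF inj_tau], simplified])
  also have "\<dots> = (\<Sum>v\<in>UNIV. g (pscale (lk \<alpha> v) (vdeg v)))"
    using inj_tau by (simp add: tau g_pscale)
  also have "\<dots> = g (mdeg \<alpha>)"
    unfolding mdeg_UNIV g_sum ..
  finally show ?thesis .
qed

lemma PP_g: "PP (g D) = PP D"
proof -
  have "Phi ` mons D = mons (g D)"
  proof (rule set_eqI, rule iffI)
    fix \<beta> assume "\<beta> \<in> Phi ` mons D" then show "\<beta> \<in> mons (g D)"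
      by (auto simp: mons_def mdeg_Phi)
  next
    fix \<beta> assume b: "\<beta> \<in> mons (g D)"
    define \<alpha> where "\<alpha> = Poly_Mapping.Abs_poly_mapping (\<lambda>v. lk \<beta> (tau v))"
    have la: "lk \<alpha> v = lk \<beta> (tau v)" for v
      unfolding \<alpha>_def by (subst lookup_Abs_poly_mapping) auto
    have "Phi \<alpha> = \<beta>"
      by (rule poly_mapping_eqI) (simp add: lk_Phi la surj_f_inv_f[OF bij_is_surj[OF bij_tau]])
    moreover have "mdeg \<alpha> = D"
    proof -
      have "g (mdeg \<alpha>) = g D" using b \<open>Phi \<alpha> = \<beta>\<close> mdeg_Phi[of \<alpha>] by (simp add: mons_def)
      then show ?thesis using g_inj by (simp add: inj_eq)
    qed
    ultimately show "\<beta> \<in> Phi ` mons D" by (auto simp: mons_def)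
  qed
  moreover have "inj_on Phi (mons D)"
  proof (rule inj_onI)
    fix \<alpha> \<beta> assume "Phi \<alpha> = Phi \<beta>"
    then have h: "lk \<alpha> (inv tau w) = lk \<beta> (inv tau w)" for w by (metis lk_Phi)
    have "lk \<alpha> v = lk \<beta> v" for v using h[of "tau v"] inj_tau by simp
    then show "\<alpha> = \<beta>" by (intro poly_mapping_eqI)
  qed
  ultimately show ?thesis unfolding PP_def by (metis card_image)
qed

lemma g_conic: "conic_class (g D) \<longleftrightarrow> conic_class D"
  unfolding conic_class_def arg_cong[where f="\<lambda>x. inter x (g D)", OF g_K, symmetric] g_inter ..

lemma g_Con5: "g ` Con5 = Con5"
proof (rule endo_inj_surj)
  show "finite Con5" unfolding Con5_def by simp
  show "g ` Con5 \<subseteq> Con5" using g_conic con_char by auto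
  show "inj_on g Con5" using g_inj by (rule inj_on_subset) simp
qed

lemma NN_g: "NN (g D) = NN D"
proof -
  have "(\<Sum>c\<in>Con5. PP (g D - c)) = (\<Sum>c\<in>g ` Con5. PP (g D - c))" by (simp add: g_Con5)
  also have "\<dots> = (\<Sum>c\<in>Con5. PP (g D - g c))"
    by (rule sum.reindex[OF inj_on_subset[OF g_inj], simplified])
  also have "\<dots> = (\<Sum>c\<in>Con5. PP (D - c))"
    by (simp add: g_diff[symmetric] PP_g)
  finally have 1: "(\<Sum>c\<in>Con5. PP (g D - c)) = (\<Sum>c\<in>Con5. PP (D - c))" .
  have "(\<Sum>c\<in>Con5. PP (g D - (nK - c))) = (\<Sum>c\<in>g ` Con5. PP (g D - (nK - c)))" by (simp add: g_Con5)
  also have "\<dots> = (\<Sum>c\<in>Con5. PP (g D - (nK - g c)))"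
    by (rule sum.reindex[OF inj_on_subset[OF g_inj], simplified])
  also have "\<dots> = (\<Sum>c\<in>Con5. PP (D - (nK - c)))"
  proof (rule sum.cong)
    fix c
    have "g D - (nK - g c) = g (D - (nK - c))" by (simp add: g_diff g_nK)
    then show "PP (g D - (nK - g c)) = PP (D - (nK - c))" by (simp add: PP_g)
  qed simp
  finally have 2: "(\<Sum>c\<in>Con5. PP (g D - (nK - c))) = (\<Sum>c\<in>Con5. PP (D - (nK - c)))" .
  have 3: "PP (g D - nK) = PP (D - nK)"
    using PP_g[of "D - nK"] by (simp add: g_diff g_nK)
  show ?thesis unfolding NN_formula 1 2 3 PP_g ..
qed

end


lemma sigma_isom: "isom sigmaW"
proof
  fix x y :: pic
  show "sigmaW (x + y) = sigmaW x + sigmaW y"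
    by (cases x; cases y) (simp add: algebra_simps)
  show "inter (sigmaW x) (sigmaW y) = inter x y"
    by (cases x; cases y) (simp add: inter_eq algebra_simps)
next
  show "inj sigmaW"
  proof (rule injI)
    fix x y :: pic assume "sigmaW x = sigmaW y"
    then have "sigmaW (sigmaW x) = sigmaW (sigmaW y)" by simp
    moreover have "sigmaW (sigmaW z) = z" for z by (cases z) simp
    ultimately show "x = y" by simp
  qed
  show "sigmaW canK = canK" by (simp add: canK_def)
qed

lemma coef_mkpic: "i \<le> 4 \<Longrightarrow> coef (mkpic f) i = f i"
  unfolding mkpic_def by (cases "i = 0"; cases "i = 1"; cases "i = 2"; cases "i = 3"; cases "i = 4") auto

lemma pic_eqI: "(\<And>i. i \<le> 4 \<Longrightarrow> coef D i = coef D' i) \<Longrightarrow> D = D'"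
proof -
  assume h: "\<And>i. i \<le> 4 \<Longrightarrow> coef D i = coef D' i"
  obtain m a1 a2 a3 a4 where D: "D = (m, a1, a2, a3, a4)" by (cases D) auto
  obtain n b1 b2 b3 b4 where D': "D' = (n, b1, b2, b3, b4)" by (cases D') auto
  show "D = D'" using h[of 0] h[of 1] h[of 2] h[of 3] h[of 4] unfolding D D' by simp
qed

lemma coef_add: "coef (D + D') i = coef D i + coef D' i"
  by (cases D; cases D') simp

lemma coef_canK: "i \<in> {1..4} \<Longrightarrow> coef canK i = 1"
  unfolding canK_def by auto

lemma perm_isom:
  assumes bij: "bij_betw \<pi> {1..4::nat} {1..4}" and fix0: "\<forall>i. i \<notin> {1..4} \<longrightarrow> \<pi> i = i"
  shows "isom (\<lambda>D. mkpic (\<lambda>i. coef D (\<pi> i)))"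
proof
  have p0: "\<pi> 0 = 0" using fix0 by simp
  have pin: "i \<in> {1..4} \<Longrightarrow> \<pi> i \<in> {1..4}" for i using bij by (auto dest: bij_betw_apply)
  have le4: "i \<le> 4 \<Longrightarrow> \<pi> i \<le> 4" for i using pin[of i] p0 by (cases "i = 0") auto
  fix x y :: pic
  show "mkpic (\<lambda>i. coef (x + y) (\<pi> i)) = mkpic (\<lambda>i. coef x (\<pi> i)) + mkpic (\<lambda>i. coef y (\<pi> i))"
    by (rule pic_eqI) (simp add: coef_mkpic coef_add)
  have "(\<Sum>i\<in>{1..4}. coef x (\<pi> i) * coef y (\<pi> i)) = (\<Sum>j\<in>{1..4}. coef x j * coef y j)"
    by (rule sum.reindex_bij_betw[OF bij])
  then show "inter (mkpic (\<lambda>i. coef x (\<pi> i))) (mkpic (\<lambda>i. coef y (\<pi> i))) = inter x y"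
    unfolding inter_def by (simp add: coef_mkpic p0)
next
  have p0: "\<pi> 0 = 0" using fix0 by simp
  have pin: "i \<in> {1..4} \<Longrightarrow> \<pi> i \<in> {1..4}" for i using bij by (auto dest: bij_betw_apply)
  show "inj (\<lambda>D. mkpic (\<lambda>i. coef D (\<pi> i)))"
  proof (rule injI)
    fix x y assume e: "mkpic (\<lambda>i. coef x (\<pi> i)) = mkpic (\<lambda>i. coef y (\<pi> i))"
    have c: "coef x (\<pi> i) = coef y (\<pi> i)" if "i \<le> 4" for i
      using arg_cong[OF e, of "\<lambda>D. coef D i"] that by (simp add: coef_mkpic)
    show "x = y"
    proof (rule pic_eqI)
      fix j :: nat assume j: "j \<le> 4"
      show "coef x j = coef y j"
      proof (cases "j = 0")
        case True then show ?thesis using c[of 0] p0 by simp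
      next
        case False
        then have "j \<in> {1..4}" using j by auto
        then obtain i where "i \<in> {1..4}" "\<pi> i = j" using bij_betw_imp_surj_on[OF bij] by (metis imageE)
        then show ?thesis using c[of i] by auto
      qed
    qed
  qed
  show "mkpic (\<lambda>i. coef canK (\<pi> i)) = canK"
  proof (rule pic_eqI)
    fix i :: nat assume i: "i \<le> 4"
    show "coef (mkpic (\<lambda>i. coef canK (\<pi> i))) i = coef canK i"
    proof (cases "i = 0")
      case True then show ?thesis by (simp add: coef_mkpic p0)
    next
      case False then have "i \<in> {1..4}" using i by auto
      then show ?thesis using pin[of i] i by (simp add: coef_mkpic coef_canK)
    qed
  qed
qed

lemma W4_NN: "g \<in> W4 \<Longrightarrow> NN (g D) = NN D"
proof (induction arbitrary: D rule: W4.induct)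
  case W4_id then show ?case by simp
next
  case (W4_step g h)
  have "NN (h x) = NN x" for x
  proof -
    from W4_step.hyps(2) consider "h = sigmaW" | "h \<in> perm_maps" by auto
    then show ?thesis
    proof cases
      case 1 then show ?thesis using isom.NN_g[OF sigma_isom] by simp
    next
      case 2
      then obtain \<pi> where "h = (\<lambda>D. mkpic (\<lambda>i. coef D (\<pi> i)))"
        "bij_betw \<pi> {1..4::nat} {1..4}" "\<forall>i. i \<notin> {1..4} \<longrightarrow> \<pi> i = i"
        unfolding perm_maps_def by blast
      then show ?thesis using isom.NN_g[OF perm_isom] by simp
    qed
  qed
  then show ?case using W4_step.IH by simp
qed

lemma part3: "g \<in> W4 \<Longrightarrow> hilb_quot (M4 :: 'k::field kE set) (g D) = hilb_quot (M4 :: 'k kE set) D"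
  using W4_NN[of g D] unfolding hilb_card NN_def by simp


lemma card_pairs_eq: "card {(i::nat, j::nat). i + j = n} = n + 1"
proof -
  have "{(i::nat, j::nat). i + j = n} = (\<lambda>i. (i, n - i)) ` {0..n}" by auto
  moreover have "inj_on (\<lambda>i. (i, n - i)) {0..n}" by (auto simp: inj_on_def)
  ultimately show ?thesis by (simp add: card_image)
qed

lemma card_pairs_le: "card {(i::nat, j::nat). i + j \<le> m} = (m + 2) choose 2"
proof (induction m)
  case 0
  have "{(i::nat, j::nat). i + j \<le> 0} = {(0,0)}" by auto
  then show ?case by (simp add: numeral_2_eq_2)
next
  case (Suc m)
  have fin: "finite {(i::nat, j::nat). i + j \<le> n}" for n
    by (rule finite_subset[of _ "{0..n} \<times> {0..n}"]) auto
  have "{(i::nat, j::nat). i + j \<le> Suc m} = {(i, j). i + j \<le> m} \<union> {(i, j). i + j = Suc m}" by auto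
  moreover have "{(i::nat, j::nat). i + j \<le> m} \<inter> {(i, j). i + j = Suc m} = {}" by auto
  moreover have "finite {(i::nat, j::nat). i + j = Suc m}"
    by (rule finite_subset[OF _ fin[of "Suc m"]]) auto
  ultimately have "card {(i::nat, j::nat). i + j \<le> Suc m} = card {(i::nat, j::nat). i + j \<le> m} + card {(i::nat, j::nat). i + j = Suc m}"
    using fin[of m] by (simp add: card_Un_disjoint)
  also have "\<dots> = (m + 2 choose 2) + (m + 2)" using Suc card_pairs_eq by simp
  also have "\<dots> = Suc m + 2 choose 2"
  proof -
    have b: "Suc (Suc (Suc m)) choose Suc (Suc 0) = Suc (Suc m) + (Suc (Suc m) choose Suc (Suc 0))"
      using binomial_Suc_Suc[of "Suc (Suc m)" "Suc 0"] by simp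
    then show ?thesis by (simp add: numeral_2_eq_2)
  qed
  finally show ?case .
qed

lemma card_triples: "card {(i::nat, j::nat, k::nat). i + j + k = m} = (m + 2) choose 2"
proof -
  have "{(i::nat, j::nat, k::nat). i + j + k = m} = (\<lambda>(i, j). (i, j, m - i - j)) ` {(i, j). i + j \<le> m}"
    by force
  moreover have "inj_on (\<lambda>(i, j). (i, j, m - i - j)) {(i::nat, j::nat). i + j \<le> m}"
    by (auto simp: inj_on_def)
  ultimately show ?thesis by (simp add: card_image card_pairs_le)
qed

lemma part4_card:
  assumes a: "1 \<le> a1" "1 \<le> a2" "1 \<le> a3" "1 \<le> a4"
  shows "card {\<alpha> \<in> mons (int m, a1, a2, a3, a4). std \<alpha>} = (m + 2) choose 2"
proof -
  let ?S = "{\<alpha> \<in> mons (int m, a1, a2, a3, a4). std \<alpha>}"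
  let ?T = "{(i::nat, j::nat, k::nat). i + j + k = m}"
  let ?f = "\<lambda>\<alpha>. (lk \<alpha> F23, lk \<alpha> F24, lk \<alpha> F34)"
  have key: "lk \<alpha> F12 = 0 \<and> lk \<alpha> F13 = 0 \<and> lk \<alpha> F14 = 0 \<and>
      lk \<alpha> F23 + lk \<alpha> F24 + lk \<alpha> F34 = m \<and>
      int (lk \<alpha> E1) = a1 \<and> int (lk \<alpha> E2) = a2 + int (lk \<alpha> F23) + int (lk \<alpha> F24) \<and>
      int (lk \<alpha> E3) = a3 + int (lk \<alpha> F23) + int (lk \<alpha> F34) \<and>
      int (lk \<alpha> E4) = a4 + int (lk \<alpha> F24) + int (lk \<alpha> F34)" if "\<alpha> \<in> ?S" for \<alpha>
  proof -
    have st: "std \<alpha>" and md: "mdeg \<alpha> = (int m, a1, a2, a3, a4)" using that by (auto simp: mons_def)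
    have c: "int (lk \<alpha> F12) + int (lk \<alpha> F13) + int (lk \<alpha> F23) + int (lk \<alpha> F14) + int (lk \<alpha> F24) + int (lk \<alpha> F34) = int m"
      "int (lk \<alpha> E1) - int (lk \<alpha> F12) - int (lk \<alpha> F13) - int (lk \<alpha> F14) = a1"
      "int (lk \<alpha> E2) - int (lk \<alpha> F12) - int (lk \<alpha> F23) - int (lk \<alpha> F24) = a2"
      "int (lk \<alpha> E3) - int (lk \<alpha> F13) - int (lk \<alpha> F23) - int (lk \<alpha> F34) = a3"
      "int (lk \<alpha> E4) - int (lk \<alpha> F14) - int (lk \<alpha> F24) - int (lk \<alpha> F34) = a4"
      using md unfolding mdeg_eq by simp_all
    have "1 \<le> lk \<alpha> E1" using c(2) a(1) by linarith
    then have z: "lk \<alpha> F12 = 0" "lk \<alpha> F13 = 0" "lk \<alpha> F14 = 0" using st unfolding std_def by auto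
    show ?thesis using c z by simp
  qed
  have "bij_betw ?f ?S ?T"
  proof (rule bij_betwI')
    fix \<alpha> \<beta> assume x: "\<alpha> \<in> ?S" and y: "\<beta> \<in> ?S"
    show "(?f \<alpha> = ?f \<beta>) = (\<alpha> = \<beta>)"
    proof
      assume e: "?f \<alpha> = ?f \<beta>"
      have f: "lk \<alpha> F23 = lk \<beta> F23" "lk \<alpha> F24 = lk \<beta> F24" "lk \<alpha> F34 = lk \<beta> F34" using e by simp_all
      have "int (lk \<alpha> E1) = int (lk \<beta> E1)" "int (lk \<alpha> E2) = int (lk \<beta> E2)"
        "int (lk \<alpha> E3) = int (lk \<beta> E3)" "int (lk \<alpha> E4) = int (lk \<beta> E4)"
        using key[OF x] key[OF y] f by simp_all
      then have g: "lk \<alpha> E1 = lk \<beta> E1" "lk \<alpha> E2 = lk \<beta> E2" "lk \<alpha> E3 = lk \<beta> E3" "lk \<alpha> E4 = lk \<beta> E4"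
        by simp_all
      have "lk \<alpha> v = lk \<beta> v" for v
        using key[OF x] key[OF y] f g by (cases v) simp_all
      then show "\<alpha> = \<beta>" by (intro poly_mapping_eqI)
    qed simp
  next
    fix \<alpha> assume "\<alpha> \<in> ?S" then show "?f \<alpha> \<in> ?T" using key by auto
  next
    fix t assume "t \<in> ?T"
    then obtain i j k where t: "t = (i, j, k)" "i + j + k = m" by auto
    define h where "h v = (case v of E1 \<Rightarrow> nat a1 | E2 \<Rightarrow> nat a2 + i + j | E3 \<Rightarrow> nat a3 + i + k
        | E4 \<Rightarrow> nat a4 + j + k | F23 \<Rightarrow> i | F24 \<Rightarrow> j | F34 \<Rightarrow> k | _ \<Rightarrow> 0)" for v
    define \<alpha> where "\<alpha> = Poly_Mapping.Abs_poly_mapping h"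
    have la: "lk \<alpha> v = h v" for v unfolding \<alpha>_def by (subst lookup_Abs_poly_mapping) auto
    have "mdeg \<alpha> = (int m, a1, a2, a3, a4)"
      unfolding mdeg_eq la h_def using t(2) a by simp
    moreover have "std \<alpha>" unfolding std_def la h_def by simp
    ultimately have "\<alpha> \<in> ?S" by (simp add: mons_def)
    moreover have "t = ?f \<alpha>" unfolding t la h_def by simp
    ultimately show "\<exists>\<alpha>\<in>?S. t = ?f \<alpha>" by blast
  qed
  then have "card ?S = card ?T" by (rule bij_betw_same_card)
  then show ?thesis using card_triples by simp
qed

lemma part4: "\<exists>N::int. \<forall>a1 a2 a3 a4. N \<le> a1 \<and> N \<le> a2 \<and> N \<le> a3 \<and> N \<le> a4 \<longrightarrow>
            hilb_quot (M4 :: 'k::field kE set) (int m, a1, a2, a3, a4) = (m + 2) choose 2"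
  by (rule exI[of _ 1]) (simp add: hilb_card part4_card)

lemma part1: "\<forall>\<alpha>\<in>set M4_gens. Poly_Mapping.lookup \<alpha> E4 = 0"
  unfolding M4_gens_def by (simp add: lookup_add lookup_single)



type_synonym 'k poly3 = "(nat \<Rightarrow>\<^sub>0 nat) \<Rightarrow>\<^sub>0 'k"

definition mq :: "(nat \<Rightarrow> 'k::field) \<Rightarrow> (nat \<Rightarrow>\<^sub>0 nat) \<Rightarrow> 'k" where
  "mq q \<alpha> = (\<Prod>t\<in>Poly_Mapping.keys \<alpha>. q t ^ Poly_Mapping.lookup \<alpha> t)"

definition ev :: "(nat \<Rightarrow> 'k::field) \<Rightarrow> 'k poly3 \<Rightarrow> 'k" where
  "ev q f = (\<Sum>\<alpha>\<in>Poly_Mapping.keys f. Poly_Mapping.lookup f \<alpha> * mq q \<alpha>)"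

lemma mq_superset: "finite K \<Longrightarrow> Poly_Mapping.keys \<alpha> \<subseteq> K \<Longrightarrow> mq q \<alpha> = (\<Prod>t\<in>K. q t ^ Poly_Mapping.lookup \<alpha> t)"
  unfolding mq_def by (rule prod.mono_neutral_left) (auto simp: in_keys_iff)

lemma mq_add: "mq q (\<alpha> + \<beta>) = mq q \<alpha> * mq q \<beta>"
proof -
  let ?K = "Poly_Mapping.keys \<alpha> \<union> Poly_Mapping.keys \<beta>"
  have "mq q (\<alpha> + \<beta>) = (\<Prod>t\<in>?K. q t ^ Poly_Mapping.lookup (\<alpha> + \<beta>) t)"
    by (rule mq_superset) (auto dest: subsetD[OF keys_add])
  also have "\<dots> = (\<Prod>t\<in>?K. q t ^ Poly_Mapping.lookup \<alpha> t) * (\<Prod>t\<in>?K. q t ^ Poly_Mapping.lookup \<beta> t)"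
    by (simp add: lookup_add power_add prod.distrib)
  also have "\<dots> = mq q \<alpha> * mq q \<beta>"
    by (simp add: mq_superset[symmetric])
  finally show ?thesis .
qed

lemma mq_single: "mq q (Poly_Mapping.single t 1) = q t"
  unfolding mq_def by simp

lemma ev_superset: "finite A \<Longrightarrow> Poly_Mapping.keys f \<subseteq> A \<Longrightarrow> ev q f = (\<Sum>\<alpha>\<in>A. Poly_Mapping.lookup f \<alpha> * mq q \<alpha>)"
  unfolding ev_def by (rule sum.mono_neutral_left) (auto simp: in_keys_iff)

lemma ev_add: "ev q (f + g) = ev q f + ev q g"
proof -
  let ?A = "Poly_Mapping.keys f \<union> Poly_Mapping.keys g"
  have "ev q (f + g) = (\<Sum>\<alpha>\<in>?A. Poly_Mapping.lookup (f + g) \<alpha> * mq q \<alpha>)"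
    by (rule ev_superset) (auto dest: subsetD[OF keys_add])
  also have "\<dots> = (\<Sum>\<alpha>\<in>?A. Poly_Mapping.lookup f \<alpha> * mq q \<alpha>) + (\<Sum>\<alpha>\<in>?A. Poly_Mapping.lookup g \<alpha> * mq q \<alpha>)"
    by (simp add: lookup_add distrib_right sum.distrib)
  also have "\<dots> = ev q f + ev q g"
    by (simp add: ev_superset[symmetric])
  finally show ?thesis .
qed

lemma ev_0 [simp]: "ev q 0 = 0"
  unfolding ev_def by simp

lemma ev_single: "ev q (Poly_Mapping.single \<alpha> c) = c * mq q \<alpha>"
  by (subst ev_superset[of "{\<alpha>}"]) auto

lemma ev_uminus: "ev q (- f) = - ev q f"
  using ev_add[of q f "- f"] minus_unique[of "ev q f" "ev q (- f)"] by simp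

lemma ev_diff: "ev q (f - g) = ev q f - ev q g"
  using ev_add[of q f "- g"] ev_uminus[of q g] by simp

lemma ev_sum: "ev q (sum F S) = (\<Sum>x\<in>S. ev q (F x))"
  by (induction S rule: infinite_finite_induct) (simp_all add: ev_add)

lemma pm_expand_gen: "(f :: 'a \<Rightarrow>\<^sub>0 'b::comm_monoid_add) = (\<Sum>\<alpha>\<in>Poly_Mapping.keys f. Poly_Mapping.single \<alpha> (Poly_Mapping.lookup f \<alpha>))"
proof (rule poly_mapping_eqI)
  fix \<beta>
  have "(\<Sum>\<alpha>\<in>Poly_Mapping.keys f. Poly_Mapping.lookup (Poly_Mapping.single \<alpha> (Poly_Mapping.lookup f \<alpha>)) \<beta>)
     = (\<Sum>\<alpha>\<in>Poly_Mapping.keys f. if \<alpha> = \<beta> then Poly_Mapping.lookup f \<beta> else 0)"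
    by (rule sum.cong) (auto simp: lookup_single when_def)
  also have "\<dots> = Poly_Mapping.lookup f \<beta>"
    by (simp add: in_keys_iff)
  finally show "Poly_Mapping.lookup f \<beta> = Poly_Mapping.lookup (\<Sum>\<alpha>\<in>Poly_Mapping.keys f. Poly_Mapping.single \<alpha> (Poly_Mapping.lookup f \<alpha>)) \<beta>"
    by (simp add: lookup_sum)
qed

lemma ev_mult: "ev q (f * g) = ev q f * ev q (g :: 'k::field poly3)"
proof -
  have "f * g = (\<Sum>\<alpha>\<in>Poly_Mapping.keys f. Poly_Mapping.single \<alpha> (Poly_Mapping.lookup f \<alpha>)) * (\<Sum>\<beta>\<in>Poly_Mapping.keys g. Poly_Mapping.single \<beta> (Poly_Mapping.lookup g \<beta>))"
    using pm_expand_gen[of f] pm_expand_gen[of g] by simp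
  also have "\<dots> = (\<Sum>\<alpha>\<in>Poly_Mapping.keys f. \<Sum>\<beta>\<in>Poly_Mapping.keys g. Poly_Mapping.single (\<alpha> + \<beta>) (Poly_Mapping.lookup f \<alpha> * Poly_Mapping.lookup g \<beta>))"
    by (simp add: sum_product mult_single)
  finally have "ev q (f * g) = (\<Sum>\<alpha>\<in>Poly_Mapping.keys f. \<Sum>\<beta>\<in>Poly_Mapping.keys g. (Poly_Mapping.lookup f \<alpha> * mq q \<alpha>) * (Poly_Mapping.lookup g \<beta> * mq q \<beta>))"
    by (simp add: ev_sum ev_single mq_add algebra_simps)
  also have "\<dots> = ev q f * ev q g"
    unfolding ev_def by (simp add: sum_product)
  finally show ?thesis .
qed

lemma ev_vanish:
  assumes "f \<in> ideal_gen {Poly_Mapping.single (Poly_Mapping.single l 1) (v j)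
        - Poly_Mapping.single (Poly_Mapping.single j 1) (v l) | j l. j \<in> {0,1,2::nat} \<and> l \<in> {0,1,2::nat}}"
  shows "ev v (f :: 'k::field poly3) = 0"
proof -
  let ?T = "{f :: 'k poly3. ev v f = 0}"
  have "ideal_gen {Poly_Mapping.single (Poly_Mapping.single l 1) (v j)
        - Poly_Mapping.single (Poly_Mapping.single j 1) (v l) | j l. j \<in> {0,1,2::nat} \<and> l \<in> {0,1,2::nat}} \<subseteq> ?T"
    unfolding ideal_gen_def
  proof (rule module.span_minimal[OF module_times])
    have "ev v (Poly_Mapping.single (Poly_Mapping.single l 1) (v j) - Poly_Mapping.single (Poly_Mapping.single j 1) (v l)) = 0" for j l
      by (simp only: ev_diff ev_single mq_single) simp
    then show "{Poly_Mapping.single (Poly_Mapping.single l 1) (v j)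
        - Poly_Mapping.single (Poly_Mapping.single j 1) (v l) | j l. j \<in> {0,1,2::nat} \<and> l \<in> {0,1,2::nat}} \<subseteq> ?T"
      by auto
    show "module.subspace (*) ?T"
      unfolding module.subspace_def[OF module_times] by (simp add: ev_add ev_mult)
  qed
  then show ?thesis using assms by auto
qed

lemma cross_param:
  fixes u0 u1 u2 a0 a1 a2 b0 b1 b2 :: "'k::field"
  assumes ha: "u0*a0+u1*a1+u2*a2 = 0" and hb: "u0*b0+u1*b1+u2*b2 = 0"
    and nz: "\<not>(a1*b2 - a2*b1 = 0 \<and> a2*b0 - a0*b2 = 0 \<and> a0*b1 - a1*b0 = 0)"
  shows "\<exists>l. u0 = l*(a1*b2 - a2*b1) \<and> u1 = l*(a2*b0 - a0*b2) \<and> u2 = l*(a0*b1 - a1*b0)"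
proof -
  have i1: "u1*(a1*b2 - a2*b1) = u0*(a2*b0 - a0*b2)" using ha hb by algebra
  have i2: "u2*(a1*b2 - a2*b1) = u0*(a0*b1 - a1*b0)" using ha hb by algebra
  have i3: "u2*(a2*b0 - a0*b2) = u1*(a0*b1 - a1*b0)" using ha hb by algebra
  show ?thesis
  proof (cases "a1*b2 - a2*b1 = 0")
    case False
    show ?thesis using i1 i2 False
      by (intro exI[of _ "u0 / (a1*b2 - a2*b1)"]) (auto simp: field_simps)
  next
    case T1: True
    show ?thesis
    proof (cases "a2*b0 - a0*b2 = 0")
      case False
      show ?thesis using i1 i3 False T1
        by (intro exI[of _ "u1 / (a2*b0 - a0*b2)"]) (auto simp: field_simps)
    next
      case T2: True
      then have F: "a0*b1 - a1*b0 \<noteq> 0" using nz T1 by blast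
      show ?thesis using i2 i3 F T1 T2
        by (intro exI[of _ "u2 / (a0*b1 - a1*b0)"]) (auto simp: field_simps)
    qed
  qed
qed

definition dot3 :: "(nat \<Rightarrow> 'k::field) \<Rightarrow> (nat \<Rightarrow> 'k) \<Rightarrow> 'k" where
  "dot3 u v = u 0 * v 0 + u 1 * v 1 + u 2 * v 2"

definition cr3 :: "(nat \<Rightarrow> 'k::field) \<Rightarrow> (nat \<Rightarrow> 'k) \<Rightarrow> nat \<Rightarrow> 'k" where
  "cr3 a b t = (if t = 0 then a 1 * b 2 - a 2 * b 1 else if t = 1 then a 2 * b 0 - a 0 * b 2 else a 0 * b 1 - a 1 * b 0)"

definition nz3 :: "(nat \<Rightarrow> 'k::field) \<Rightarrow> bool" where
  "nz3 u \<longleftrightarrow> \<not>(u 0 = 0 \<and> u 1 = 0 \<and> u 2 = 0)"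

definition dt :: "(nat \<Rightarrow> 'k::field) \<Rightarrow> (nat \<Rightarrow> 'k) \<Rightarrow> (nat \<Rightarrow> 'k) \<Rightarrow> 'k" where
  "dt a b c = det3 (a 0) (a 1) (a 2) (b 0) (b 1) (b 2) (c 0) (c 1) (c 2)"

lemma cross_vec:
  assumes "dot3 u a = 0" "dot3 u b = 0" "nz3 (cr3 a b)"
  shows "\<exists>l. u 0 = l * cr3 a b 0 \<and> u 1 = l * cr3 a b 1 \<and> u 2 = l * cr3 a b 2"
  using cross_param[of "u 0" "a 0" "u 1" "a 1" "u 2" "a 2" "b 0" "b 1" "b 2"] assms
  unfolding dot3_def nz3_def cr3_def by simp

lemma dt_cr: "dt a b c = cr3 a b 0 * c 0 + cr3 a b 1 * c 1 + cr3 a b 2 * c 2"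
  unfolding dt_def det3_def cr3_def by (simp add: algebra_simps)

lemma nz_cross: "dt a b c \<noteq> 0 \<Longrightarrow> nz3 (cr3 a b)"
  unfolding nz3_def dt_cr by auto

lemma line3:
  assumes dbcd: "dt b c d \<noteq> 0"
    and u: "dot3 u a = 0" "dot3 u b = 0" "nz3 (cr3 a b)"
    and v: "dot3 v b = 0" "dot3 v c = 0" "nz3 (cr3 b c)" "nz3 v"
    and w: "dot3 w b = 0" "dot3 w d = 0" "nz3 (cr3 b d)" "nz3 w"
  shows "\<exists>c1 c2 c3. c1 \<noteq> 0 \<and> (\<forall>t. t \<le> 2 \<longrightarrow> c1 * u t + c2 * v t + c3 * w t = 0)"
proof -
  obtain l1 where l1: "u 0 = l1 * cr3 a b 0" "u 1 = l1 * cr3 a b 1" "u 2 = l1 * cr3 a b 2"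
    using cross_vec[OF u] by blast
  obtain l2 where l2: "v 0 = l2 * cr3 b c 0" "v 1 = l2 * cr3 b c 1" "v 2 = l2 * cr3 b c 2"
    using cross_vec[OF v(1-3)] by blast
  obtain l3 where l3: "w 0 = l3 * cr3 b d 0" "w 1 = l3 * cr3 b d 1" "w 2 = l3 * cr3 b d 2"
    using cross_vec[OF w(1-3)] by blast
  have "l2 \<noteq> 0" using l2 v(4) unfolding nz3_def by auto
  moreover have "l3 \<noteq> 0" using l3 w(4) unfolding nz3_def by auto
  ultimately have c1: "dt b c d * l2 * l3 \<noteq> 0" using dbcd by simp
  have id: "dt b c d * cr3 a b t + dt b a d * cr3 b c t + dt b c a * cr3 b d t = 0" for t
    unfolding dt_def det3_def cr3_def by (simp add: algebra_simps)
  have "(dt b c d * l2 * l3) * u t + (l1 * l3 * dt b a d) * v t + (l1 * l2 * dt b c a) * w t = 0" if "t \<le> 2" for t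
  proof -
    have "(dt b c d * l2 * l3) * (l1 * cr3 a b t) + (l1 * l3 * dt b a d) * (l2 * cr3 b c t) + (l1 * l2 * dt b c a) * (l3 * cr3 b d t)
        = l1 * l2 * l3 * (dt b c d * cr3 a b t + dt b a d * cr3 b c t + dt b c a * cr3 b d t)"
      by (simp add: algebra_simps)
    also have "\<dots> = 0" using id by simp
    finally have z: "(dt b c d * l2 * l3) * (l1 * cr3 a b t) + (l1 * l3 * dt b a d) * (l2 * cr3 b c t) + (l1 * l2 * dt b c a) * (l3 * cr3 b d t) = 0" .
    have "t = 0 \<or> t = 1 \<or> t = 2" using that by auto
    then show ?thesis using z l1 l2 l3 by (elim disjE) simp_all
  qed
  then show ?thesis using c1 by blast
qed

definition lin :: "(nat \<Rightarrow> 'k::field) \<Rightarrow> 'k poly3" where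
  "lin u = (\<Sum>s\<in>{0,1,2}. Poly_Mapping.single (Poly_Mapping.single s 1) (u s))"

lemma ev_lin: "ev q (lin u) = dot3 u q"
  unfolding lin_def dot3_def by (simp only: ev_sum ev_single mq_single) simp

lemma lin_mult: "lin u * lin v = (\<Sum>s\<in>{0,1,2}. \<Sum>t\<in>{0,1,2::nat}. Poly_Mapping.single (Poly_Mapping.single s 1 + Poly_Mapping.single t 1) (u s * v t))"
  unfolding lin_def sum_product by (simp add: mult_single)

lemma const_lin: "Poly_Mapping.single 0 k * lin u = lin (\<lambda>s. k * u s)"
  unfolding lin_def sum_distrib_left mult_single add_0_left ..

lemma lin_add: "lin u + lin v = lin (\<lambda>s. u s + v s)"
  unfolding lin_def by (simp add: single_add)

lemma lin_zero: "u 0 = 0 \<Longrightarrow> u 1 = 0 \<Longrightarrow> u 2 = 0 \<Longrightarrow> lin u = 0"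
  unfolding lin_def by simp

lemma lin_nz: "lin u \<noteq> 0 \<Longrightarrow> nz3 u"
  unfolding nz3_def using lin_zero by blast

lemma pm_expand_superset: "finite A \<Longrightarrow> Poly_Mapping.keys f \<subseteq> A \<Longrightarrow>
   (f :: 'a \<Rightarrow>\<^sub>0 'b::comm_monoid_add) = (\<Sum>\<alpha>\<in>A. Poly_Mapping.single \<alpha> (Poly_Mapping.lookup f \<alpha>))"
  by (subst pm_expand_gen) (rule sum.mono_neutral_left, auto simp: in_keys_iff)

lemma homog0_const: "f \<in> homog 0 \<Longrightarrow> f = Poly_Mapping.single 0 (Poly_Mapping.lookup f 0)"
proof -
  assume h: "f \<in> homog 0"
  have "Poly_Mapping.keys f \<subseteq> {0}"
  proof
    fix \<alpha> assume a: "\<alpha> \<in> Poly_Mapping.keys f"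
    then have k: "Poly_Mapping.keys \<alpha> \<subseteq> {0,1,2}" and s: "Poly_Mapping.lookup \<alpha> 0 + Poly_Mapping.lookup \<alpha> 1 + Poly_Mapping.lookup \<alpha> 2 = 0"
      using h unfolding homog_def by auto
    have "Poly_Mapping.lookup \<alpha> t = 0" for t
    proof (cases "t \<in> {0,1,2}")
      case True then show ?thesis using s by auto
    next
      case False then show ?thesis using k by (auto simp: in_keys_iff)
    qed
    then show "\<alpha> \<in> {0}" by (simp add: poly_mapping_eqI)
  qed
  then show ?thesis using pm_expand_superset[of "{0}" f] by simp
qed

lemma pm3: "Poly_Mapping.keys (\<alpha> :: nat \<Rightarrow>\<^sub>0 nat) \<subseteq> {0,1,2} \<Longrightarrow>
   \<alpha> = Poly_Mapping.single 0 (Poly_Mapping.lookup \<alpha> 0) + Poly_Mapping.single 1 (Poly_Mapping.lookup \<alpha> 1) + Poly_Mapping.single 2 (Poly_Mapping.lookup \<alpha> 2)"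
  by (subst pm_expand_superset[of "{0,1,2}" \<alpha>]) (simp_all add: add.assoc)

lemma single_Suc0_inj [simp]: "Poly_Mapping.single x (Suc 0) = Poly_Mapping.single y (Suc 0) \<longleftrightarrow> x = y"
  by (metis lookup_single_eq lookup_single_not_eq nat.distinct(1))

lemma homog1_lin: "f \<in> homog 1 \<Longrightarrow> f = lin (\<lambda>s. Poly_Mapping.lookup f (Poly_Mapping.single s 1))"
proof -
  assume h: "f \<in> homog 1"
  let ?E = "(\<lambda>s. Poly_Mapping.single s (1::nat)) ` {0,1,2::nat}"
  have "Poly_Mapping.keys f \<subseteq> ?E"
  proof
    fix \<alpha> assume a: "\<alpha> \<in> Poly_Mapping.keys f"
    then have k: "Poly_Mapping.keys \<alpha> \<subseteq> {0,1,2}" and s: "Poly_Mapping.lookup \<alpha> 0 + Poly_Mapping.lookup \<alpha> 1 + Poly_Mapping.lookup \<alpha> 2 = 1"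
      using h unfolding homog_def by auto
    have out: "t \<notin> {0,1,2} \<Longrightarrow> Poly_Mapping.lookup \<alpha> t = 0" for t using k by (auto simp: in_keys_iff)
    from s consider "Poly_Mapping.lookup \<alpha> 0 = 1" "Poly_Mapping.lookup \<alpha> 1 = 0" "Poly_Mapping.lookup \<alpha> 2 = 0"
      | "Poly_Mapping.lookup \<alpha> 0 = 0" "Poly_Mapping.lookup \<alpha> 1 = 1" "Poly_Mapping.lookup \<alpha> 2 = 0"
      | "Poly_Mapping.lookup \<alpha> 0 = 0" "Poly_Mapping.lookup \<alpha> 1 = 0" "Poly_Mapping.lookup \<alpha> 2 = 1" by linarith
    then show "\<alpha> \<in> ?E"
    proof cases
      case 1
      then have "\<alpha> = Poly_Mapping.single 0 1"
        using pm3[OF k] by simp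
      then show ?thesis by simp
    next
      case 2
      then have "\<alpha> = Poly_Mapping.single 1 1"
        using pm3[OF k] by simp
      then show ?thesis by simp
    next
      case 3
      then have "\<alpha> = Poly_Mapping.single 2 1"
        using pm3[OF k] by simp
      then show ?thesis by simp
    qed
  qed
  then have "f = (\<Sum>\<alpha>\<in>?E. Poly_Mapping.single \<alpha> (Poly_Mapping.lookup f \<alpha>))"
    by (rule pm_expand_superset[rotated]) simp
  also have "\<dots> = (\<Sum>s\<in>{0,1,2::nat}. Poly_Mapping.single (Poly_Mapping.single s 1) (Poly_Mapping.lookup f (Poly_Mapping.single s 1)))"
    by (rule sum.reindex_cong[where l="\<lambda>s. Poly_Mapping.single s 1"]) (auto simp: inj_on_def)
  finally show ?thesis unfolding lin_def .
qed

lemma ideal_pow1: "f \<in> ideal_pow (ideal_gen G) 1 \<Longrightarrow> f \<in> ideal_gen (G :: 'a::comm_ring_1 set)"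
proof -
  assume f: "f \<in> ideal_pow (ideal_gen G) 1"
  have "{prod_list xs | xs. length xs = 1 \<and> set xs \<subseteq> ideal_gen G} \<subseteq> ideal_gen G"
  proof
    fix x assume "x \<in> {prod_list xs | xs. length xs = 1 \<and> set xs \<subseteq> ideal_gen G}"
    then obtain xs where "x = prod_list xs" "length xs = 1" "set xs \<subseteq> ideal_gen G" by auto
    then show "x \<in> ideal_gen G" by (cases xs) auto
  qed
  then have "ideal_gen {prod_list xs | xs. length xs = 1 \<and> set xs \<subseteq> ideal_gen G} \<subseteq> ideal_gen (ideal_gen G)"
    unfolding ideal_gen_def by (rule module.span_mono[OF module_times])
  also have "\<dots> = ideal_gen G" unfolding ideal_gen_def by (rule module.span_span[OF module_times])
  finally show ?thesis using f unfolding ideal_pow_def by auto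
qed

lemma secF:
  assumes "f \<in> homog 1" "f \<in> ideal_pow (point_ideal (p i)) 1" "f \<in> ideal_pow (point_ideal (p j)) 1"
  shows "f = lin (\<lambda>s. Poly_Mapping.lookup f (Poly_Mapping.single s 1)) \<and>
     dot3 (\<lambda>s. Poly_Mapping.lookup f (Poly_Mapping.single s 1)) (p i) = 0 \<and>
     dot3 (\<lambda>s. Poly_Mapping.lookup f (Poly_Mapping.single s 1)) (p j) = (0::'k::field)"
proof -
  have e: "f = lin (\<lambda>s. Poly_Mapping.lookup f (Poly_Mapping.single s 1))" by (rule homog1_lin[OF assms(1)])
  have "ev (p i) f = 0" using ev_vanish ideal_pow1[OF assms(2)[unfolded point_ideal_def]] by blast
  moreover have "ev (p j) f = 0" using ev_vanish ideal_pow1[OF assms(3)[unfolded point_ideal_def]] by blast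
  ultimately show ?thesis using e ev_lin by metis
qed

lemma zero9:
  assumes d: "B 0 0 = 0" "B 1 1 = 0" "B 2 2 = 0"
    and a: "B 1 0 = - B 0 1" "B 2 0 = - B 0 2" "B 2 1 = - B 1 2"
  shows "(\<Sum>s\<in>{0,1,2}. \<Sum>t\<in>{0,1,2::nat}. Poly_Mapping.single (Poly_Mapping.single s 1 + Poly_Mapping.single t (1::nat)) (B s t)) = (0::'k::field poly3)"
proof -
  let ?e = "\<lambda>s. Poly_Mapping.single s (1::nat)"
  have eq: "(\<Sum>s\<in>{0,1,2}. \<Sum>t\<in>{0,1,2::nat}. Poly_Mapping.single (?e s + ?e t) (B s t)) =
     Poly_Mapping.single (?e 0 + ?e 0) (B 0 0) + Poly_Mapping.single (?e 1 + ?e 1) (B 1 1) + Poly_Mapping.single (?e 2 + ?e 2) (B 2 2)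
     + Poly_Mapping.single (?e 0 + ?e 1) (B 0 1 + B 1 0) + Poly_Mapping.single (?e 0 + ?e 2) (B 0 2 + B 2 0)
     + Poly_Mapping.single (?e 1 + ?e 2) (B 1 2 + B 2 1)"
    by (simp add: single_add add_ac)
  show ?thesis unfolding eq using d a by simp
qed



declare One_nat_def [simp del]

abbreviation m2 :: "ev \<Rightarrow> ev \<Rightarrow> mon" where "m2 a b \<equiv> Poly_Mapping.single a 1 + Poly_Mapping.single b 1"

lemma lk_m2: "lk (m2 a b) v = (if v = a then 1 else 0) + (if v = b then 1 else 0)"
  by (simp add: lookup_add lookup_single when_def)

lemma tdeg_m2: "tdeg (m2 a b) = 2"
  unfolding tdeg_def UNIV_ev[symmetric] lk_m2 by (simp add: sum.distrib)

lemma inj_vidx: "vidx v = vidx w \<Longrightarrow> v = w"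
  by (cases v; cases w) simp_all

lemma revlex_asym: "revlex_less \<alpha> \<beta> \<Longrightarrow> \<not> revlex_less \<beta> \<alpha>"
proof
  assume a: "revlex_less \<alpha> \<beta>" and b: "revlex_less \<beta> \<alpha>"
  have t: "tdeg \<alpha> = tdeg \<beta>" using a b unfolding revlex_less_def by auto
  obtain v where v: "lk \<alpha> v > lk \<beta> v" "\<forall>w. vidx w > vidx v \<longrightarrow> lk \<alpha> w = lk \<beta> w"
    using a t unfolding revlex_less_def by auto
  obtain v' where v': "lk \<beta> v' > lk \<alpha> v'" "\<forall>w. vidx w > vidx v' \<longrightarrow> lk \<beta> w = lk \<alpha> w"
    using b t unfolding revlex_less_def by auto
  consider "vidx v < vidx v'" | "vidx v' < vidx v" | "vidx v = vidx v'" by linarith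
  then show False
  proof cases
    case 1 then show False using v(2) v'(1) by fastforce
  next
    case 2 then show False using v'(2) v(1) by fastforce
  next
    case 3 then have "v = v'" by (rule inj_vidx)
    then show False using v(1) v'(1) by simp
  qed
qed

lemma revlex_m2:
  assumes "a \<noteq> b" "c \<noteq> d" "vidx a < vidx b" "vidx c < vidx b" "vidx d < vidx b"
  shows "revlex_less (m2 a b) (m2 c d)"
  unfolding revlex_less_def tdeg_m2
proof (intro disjI2 conjI refl exI[of _ b] allI impI)
  show "lk (m2 c d) b < lk (m2 a b) b" using assms unfolding lk_m2 by auto
  fix w assume "vidx b < vidx w"
  then have "w \<noteq> a" "w \<noteq> b" "w \<noteq> c" "w \<noteq> d" using assms by auto
  then show "lk (m2 a b) w = lk (m2 c d) w" unfolding lk_m2 by simp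
qed

lemma lead3:
  assumes d: "b1 \<noteq> b2" "b1 \<noteq> b3" "b2 \<noteq> b3" and c1: "c1 \<noteq> 0"
    and r: "revlex_less b2 b1" "revlex_less b3 b1"
  shows "lead_mon (Poly_Mapping.single b1 c1 + Poly_Mapping.single b2 c2 + Poly_Mapping.single b3 (c3 :: 'k::field)) = b1"
proof -
  let ?f = "Poly_Mapping.single b1 c1 + Poly_Mapping.single b2 c2 + Poly_Mapping.single b3 (c3 :: 'k::field)"
  have lk: "Poly_Mapping.lookup ?f x = (if x = b1 then c1 else 0) + (if x = b2 then c2 else 0) + (if x = b3 then c3 else 0)" for x
    by (simp add: lookup_add lookup_single when_def)
  have k: "Poly_Mapping.keys ?f \<subseteq> {b1, b2, b3}" by (auto simp: in_keys_iff lk split: if_splits)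
  have b1k: "b1 \<in> Poly_Mapping.keys ?f" using d c1 by (simp add: in_keys_iff lk)
  have n: "\<not> revlex_less b1 b2" "\<not> revlex_less b1 b3" using r revlex_asym by blast+
  show ?thesis unfolding lead_mon_def
  proof (rule the_equality)
    show "b1 \<in> Poly_Mapping.keys ?f \<and> (\<forall>\<beta>\<in>Poly_Mapping.keys ?f. \<beta> \<noteq> b1 \<longrightarrow> revlex_less \<beta> b1)"
      using b1k k r by auto
    fix \<alpha> assume "\<alpha> \<in> Poly_Mapping.keys ?f \<and> (\<forall>\<beta>\<in>Poly_Mapping.keys ?f. \<beta> \<noteq> \<alpha> \<longrightarrow> revlex_less \<beta> \<alpha>)"
    then show "\<alpha> = b1" using k b1k n by auto
  qed
qed


lemma prod_m2:
  assumes "a \<noteq> b"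
  shows "(\<Prod>v\<in>all_vars. h v ^ lk (m2 a b) v) = h a * (h b :: 'a::comm_monoid_mult)"
proof -
  have "(\<Prod>v\<in>UNIV. h v ^ lk (m2 a b) v) = (\<Prod>v\<in>{a,b}. h v ^ lk (m2 a b) v)"
    by (rule prod.mono_neutral_right) (auto simp: lk_m2)
  also have "\<dots> = h a * h b" using assms by (simp add: lk_m2)
  finally show ?thesis unfolding UNIV_ev .
qed

lemma sum_m2:
  assumes "a \<noteq> b"
  shows "(\<Sum>v\<in>all_vars. pscale (lk (m2 a b) v) (vdeg v)) = vdeg a + vdeg b"
proof -
  have p0: "pscale 0 x = 0" for x by (cases x) (simp add: zero_prod_def)
  have p1: "pscale 1 x = x" for x by (cases x) simp
  have "(\<Sum>v\<in>UNIV. pscale (lk (m2 a b) v) (vdeg v)) = (\<Sum>v\<in>{a,b}. pscale (lk (m2 a b) v) (vdeg v))"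
    by (rule sum.mono_neutral_right) (auto simp: lk_m2 p0)
  also have "\<dots> = vdeg a + vdeg b" using assms by (simp add: lk_m2 p1)
  finally show ?thesis unfolding UNIV_ev .
qed

lemma mdeg_m2: "a \<noteq> b \<Longrightarrow> mdeg (m2 a b) = vdeg a + vdeg b"
  unfolding mdeg_def by (rule sum_m2)

lemma rel_init:
  fixes s :: "ev \<Rightarrow> 'k::field kxyz"
  assumes ab: "a1 \<noteq> b1" "a2 \<noteq> b2" "a3 \<noteq> b3"
    and dist: "m2 a1 b1 \<noteq> m2 a2 b2" "m2 a1 b1 \<noteq> m2 a3 b3" "m2 a2 b2 \<noteq> m2 a3 b3"
    and D: "vdeg a1 + vdeg b1 = D" "vdeg a2 + vdeg b2 = D" "vdeg a3 + vdeg b3 = D" "conic_class D"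
    and r: "revlex_less (m2 a2 b2) (m2 a1 b1)" "revlex_less (m2 a3 b3) (m2 a1 b1)"
    and c1: "c1 \<noteq> 0"
    and rel: "Poly_Mapping.single 0 c1 * (s a1 * s b1) + Poly_Mapping.single 0 c2 * (s a2 * s b2)
        + Poly_Mapping.single 0 c3 * (s a3 * s b3) = 0"
  shows "Poly_Mapping.single (m2 a1 b1) 1 \<in> init_ideal (Q4 s)"
proof -
  let ?f = "Poly_Mapping.single (m2 a1 b1) c1 + Poly_Mapping.single (m2 a2 b2) c2 + Poly_Mapping.single (m2 a3 b3) (c3 :: 'k)"
  let ?B = "{m2 a1 b1, m2 a2 b2, m2 a3 b3}"
  have lk: "Poly_Mapping.lookup ?f x = (if x = m2 a1 b1 then c1 else 0) + (if x = m2 a2 b2 then c2 else 0) + (if x = m2 a3 b3 then c3 else 0)" for x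
    by (simp add: lookup_add lookup_single when_def)
  have k: "Poly_Mapping.keys ?f \<subseteq> ?B" by (auto simp: in_keys_iff lk split: if_splits)
  let ?T = "\<lambda>\<alpha>. Poly_Mapping.single 0 (Poly_Mapping.single 0 (Poly_Mapping.lookup ?f \<alpha>))
                      * (\<Prod>v\<in>all_vars. sec s v ^ Poly_Mapping.lookup \<alpha> v)"
  have "cox_eval s ?f = (\<Sum>\<alpha>\<in>?B. ?T \<alpha>)"
    unfolding cox_eval_def by (rule sum.mono_neutral_left) (use k in \<open>auto simp: in_keys_iff\<close>)
  also have "\<dots> = ?T (m2 a1 b1) + ?T (m2 a2 b2) + ?T (m2 a3 b3)"
    using dist by (simp add: add.assoc)
  also have "\<dots> = Poly_Mapping.single D (Poly_Mapping.single 0 c1 * (s a1 * s b1) + Poly_Mapping.single 0 c2 * (s a2 * s b2)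
        + Poly_Mapping.single 0 c3 * (s a3 * s b3))"
    using dist ab D unfolding lk by (simp add: prod_m2 sec_def mult_single single_add)
  also have "\<dots> = 0" using rel by simp
  finally have C: "?f \<in> C4 s" unfolding C4_def by simp
  have P: "?f \<in> piece D" unfolding piece_def using k ab D by (auto simp: mdeg_m2)
  have Q: "?f \<in> Q4 s" unfolding Q4_def ideal_gen_def
    by (rule module.span_base[OF module_times]) (use C P D(4) in blast)
  have nz: "?f \<noteq> 0"
  proof
    assume "?f = 0"
    then have "Poly_Mapping.lookup ?f (m2 a1 b1) = 0" by simp
    then show False using dist c1 unfolding lk by simp
  qed
  have L: "lead_mon ?f = m2 a1 b1" by (rule lead3[OF dist c1 r])
  show ?thesis unfolding init_ideal_def ideal_gen_def
    by (rule module.span_base[OF module_times]) (use Q nz L in force)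
qed




lemma line_rel:
  fixes u v w :: "nat \<Rightarrow> 'k::field"
  assumes k: "k1 \<noteq> 0" "k2 \<noteq> 0" "k3 \<noteq> 0"
    and c: "c1 \<noteq> 0" "\<forall>t. t \<le> 2 \<longrightarrow> c1 * u t + c2 * v t + c3 * w t = 0"
  shows "\<exists>d1 d2 d3. d1 \<noteq> 0 \<and> Poly_Mapping.single 0 d1 * (Poly_Mapping.single 0 k1 * lin u)
     + Poly_Mapping.single 0 d2 * (Poly_Mapping.single 0 k2 * lin v) + Poly_Mapping.single 0 d3 * (Poly_Mapping.single 0 k3 * lin w) = 0"
proof (intro exI conjI)
  show "c1 / k1 \<noteq> 0" using k c by simp
  have "Poly_Mapping.single 0 (c1 / k1) * (Poly_Mapping.single 0 k1 * lin u)
     + Poly_Mapping.single 0 (c2 / k2) * (Poly_Mapping.single 0 k2 * lin v) + Poly_Mapping.single 0 (c3 / k3) * (Poly_Mapping.single 0 k3 * lin w)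
     = lin (\<lambda>t. c1 * u t + c2 * v t + c3 * w t)"
    using k by (simp add: const_lin lin_add mult.assoc[symmetric])
  also have "\<dots> = 0" by (rule lin_zero) (use c in simp_all)
  finally show "Poly_Mapping.single 0 (c1 / k1) * (Poly_Mapping.single 0 k1 * lin u)
     + Poly_Mapping.single 0 (c2 / k2) * (Poly_Mapping.single 0 k2 * lin v) + Poly_Mapping.single 0 (c3 / k3) * (Poly_Mapping.single 0 k3 * lin w) = 0" .
qed

lemma single0_lin_mult: "Poly_Mapping.single 0 d * (lin u * lin v) =
   (\<Sum>s\<in>{0,1,2}. \<Sum>t\<in>{0,1,2::nat}. Poly_Mapping.single (Poly_Mapping.single s 1 + Poly_Mapping.single t 1) (d * u s * v t))"
  unfolding lin_mult sum_distrib_left mult_single add_0_left mult.assoc ..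

lemma sum9_add: "(\<Sum>s\<in>{0,1,2::nat}. \<Sum>t\<in>{0,1,2::nat}. Poly_Mapping.single (e s t) (f s t))
   + (\<Sum>s\<in>{0,1,2::nat}. \<Sum>t\<in>{0,1,2::nat}. Poly_Mapping.single (e s t) (g s t))
   = (\<Sum>s\<in>{0,1,2::nat}. \<Sum>t\<in>{0,1,2::nat}. Poly_Mapping.single (e s t) (f s t + g s t :: 'k::comm_monoid_add))"
  by (simp only: single_add sum.distrib)

lemma quad_rel:
  fixes u12 u34 u13 u24 u14 u23 :: "nat \<Rightarrow> 'k::field"
  assumes l: "l12 \<noteq> 0" "l34 \<noteq> 0" "l13 \<noteq> 0" "l24 \<noteq> 0" "l14 \<noteq> 0" "l23 \<noteq> 0"
    and u12: "\<forall>t. u12 t = l12 * cr3 p1 p2 t" and u34: "\<forall>t. u34 t = l34 * cr3 p3 p4 t"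
    and u13: "\<forall>t. u13 t = l13 * cr3 p1 p3 t" and u24: "\<forall>t. u24 t = l24 * cr3 p2 p4 t"
    and u14: "\<forall>t. u14 t = l14 * cr3 p1 p4 t" and u23: "\<forall>t. u23 t = l23 * cr3 p2 p3 t"
  shows "\<exists>d1 d2 d3. d1 \<noteq> 0 \<and> Poly_Mapping.single 0 d1 * (lin u23 * lin u14)
     + Poly_Mapping.single 0 d2 * (lin u12 * lin u34) + Poly_Mapping.single 0 d3 * (lin u13 * lin u24) = 0"
proof (intro exI conjI)
  let ?d1 = "1 / (l23 * l14)" and ?d2 = "1 / (l12 * l34)" and ?d3 = "- 1 / (l13 * l24)"
  show "?d1 \<noteq> 0" using l by simp
  define B where "B s t = ?d1 * u23 s * u14 t + (?d2 * u12 s * u34 t + ?d3 * u13 s * u24 t)" for s t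
  have B: "B s t = cr3 p2 p3 s * cr3 p1 p4 t + cr3 p1 p2 s * cr3 p3 p4 t - cr3 p1 p3 s * cr3 p2 p4 t" for s t
    unfolding B_def using l u12 u34 u13 u24 u14 u23 by (simp add: field_simps)
  have "B 0 0 = 0" "B 1 1 = 0" "B 2 2 = 0" "B 1 0 = - B 0 1" "B 2 0 = - B 0 2" "B 2 1 = - B 1 2"
    unfolding B cr3_def by (simp_all add: algebra_simps)
  then have z: "(\<Sum>s\<in>{0,1,2}. \<Sum>t\<in>{0,1,2::nat}. Poly_Mapping.single (Poly_Mapping.single s 1 + Poly_Mapping.single t (1::nat)) (B s t)) = (0::'k poly3)"
    by (rule zero9)
  show "Poly_Mapping.single 0 ?d1 * (lin u23 * lin u14)
     + Poly_Mapping.single 0 ?d2 * (lin u12 * lin u34) + Poly_Mapping.single 0 ?d3 * (lin u13 * lin u24) = 0"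
    unfolding single0_lin_mult add.assoc sum9_add unfolding B_def[symmetric] by (rule z)
qed


lemma lin_cong: "u 0 = v 0 \<Longrightarrow> u 1 = v 1 \<Longrightarrow> u 2 = v 2 \<Longrightarrow> lin u = lin v"
  unfolding lin_def by simp

lemma dot_cr1: "dot3 (\<lambda>t. l * cr3 a b t) a = 0"
  unfolding dot3_def cr3_def by (simp add: algebra_simps)

lemma dot_cr2: "dot3 (\<lambda>t. l * cr3 a b t) b = 0"
  unfolding dot3_def cr3_def by (simp add: algebra_simps)

lemma dot_cr: "x \<in> {a, b} \<Longrightarrow> dot3 (\<lambda>t. l * cr3 a b t) x = 0"
  using dot_cr1 dot_cr2 by auto

lemma nz_scale: "l \<noteq> 0 \<Longrightarrow> nz3 u \<Longrightarrow> nz3 (\<lambda>t. l * u t)"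
  unfolding nz3_def by simp

lemma gpd:
  assumes "general_position p" "i \<in> {1..4}" "j \<in> {1..4}" "k \<in> {1..4}" "i \<noteq> j" "j \<noteq> k" "i \<noteq> k"
  shows "dt (p i) (p j) (p k) \<noteq> 0"
  using assms unfolding general_position_def dt_def by blast

lemma secE:
  assumes "f \<in> H0 p D" "coef D 0 = 0" "f \<noteq> 0"
  shows "\<exists>k. k \<noteq> 0 \<and> f = Poly_Mapping.single 0 k"
proof -
  have "f \<in> homog 0" using assms(1,2) unfolding H0_def by simp
  then have "f = Poly_Mapping.single 0 (Poly_Mapping.lookup f 0)" by (rule homog0_const)
  then show ?thesis using assms(3) by (intro exI[of _ "Poly_Mapping.lookup f 0"]) auto
qed

lemma secF2:
  assumes "f \<in> H0 p D" "coef D 0 = 1" "coef D i = -1" "coef D j = -1" "i \<in> {1..4}" "j \<in> {1..4}" "f \<noteq> 0"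
    and nz: "nz3 (cr3 (p i) (p j))"
  shows "\<exists>l. l \<noteq> 0 \<and> f = lin (\<lambda>t. l * cr3 (p i) (p j) t)"
proof -
  have H: "\<forall>i\<in>{1..4}. f \<in> ideal_pow (point_ideal (p i)) (nat (- coef D i))" "f \<in> homog (coef D 0)"
    using assms(1) unfolding H0_def by auto
  have hi: "f \<in> ideal_pow (point_ideal (p i)) (nat (- coef D i))" using H(1) assms(5) by blast
  have hj: "f \<in> ideal_pow (point_ideal (p j)) (nat (- coef D j))" using H(1) assms(6) by blast
  have h: "f \<in> homog 1" "f \<in> ideal_pow (point_ideal (p i)) 1" "f \<in> ideal_pow (point_ideal (p j)) 1"
    using H(2) assms(2) hi hj assms(3,4) by (simp_all add: One_nat_def)
  let ?u = "\<lambda>s. Poly_Mapping.lookup f (Poly_Mapping.single s 1)"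
  have e: "f = lin ?u" "dot3 ?u (p i) = 0" "dot3 ?u (p j) = 0" using secF[OF h] by auto
  obtain l where l: "?u 0 = l * cr3 (p i) (p j) 0" "?u 1 = l * cr3 (p i) (p j) 1" "?u 2 = l * cr3 (p i) (p j) 2"
    using cross_vec[OF e(2,3) nz] by blast
  have f: "f = lin (\<lambda>t. l * cr3 (p i) (p j) t)" using e(1) l by (metis lin_cong)
  have "l \<noteq> 0"
  proof
    assume "l = 0" then have "f = lin (\<lambda>t. 0)" using f by simp
    also have "\<dots> = 0" by (rule lin_zero) simp_all
    finally show False using assms(7) by simp
  qed
  then show ?thesis using f by blast
qed

lemma nzc_gp:
  assumes gp: "general_position p" and xy: "x \<in> {1..4}" "y \<in> {1..4}" "x \<noteq> y"
  shows "nz3 (cr3 (p x) (p (y::nat)))"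
  proof -
  have "\<exists>z\<in>{1..4::nat}. z \<noteq> x \<and> z \<noteq> y"
  proof -
    consider "x \<noteq> 1 \<and> y \<noteq> 1" | "x \<noteq> 2 \<and> y \<noteq> 2" | "x \<noteq> 3 \<and> y \<noteq> 3" using \<open>x \<noteq> y\<close> by force
    then show ?thesis
    proof cases
      case 1 then show ?thesis by (intro bexI[of _ 1]) auto
    next
      case 2 then show ?thesis by (intro bexI[of _ 2]) auto
    next
      case 3 then show ?thesis by (intro bexI[of _ 3]) auto
    qed
qed
  then obtain z where "z \<in> {1..4}" "z \<noteq> x" "z \<noteq> y" by blast
  then show ?thesis using gpd[OF gp xy(1,2)] xy nz_cross by metis
qed

lemma line_gen:
  fixes p :: "nat \<Rightarrow> nat \<Rightarrow> 'k::field"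
  assumes gp: "general_position p"
    and idx: "a \<in> {1..4}" "b \<in> {1..4}" "c \<in> {1..4}" "d \<in> {1..4}" "a \<noteq> b" "a \<noteq> c" "a \<noteq> d" "b \<noteq> c" "b \<noteq> d" "c \<noteq> d"
    and ka: "ka \<noteq> 0" and kc: "kc \<noteq> 0" and kd: "kd \<noteq> 0"
    and la: "la \<noteq> 0" "{xa, ya} = {a, b}"
    and lc: "lc \<noteq> 0" "{xc, yc} = {b, c}"
    and ld: "ld \<noteq> 0" "{xd, yd} = {b, d}"
  shows "\<exists>d1 d2 d3. d1 \<noteq> 0 \<and> Poly_Mapping.single 0 d1 * (Poly_Mapping.single 0 ka * lin (\<lambda>t. la * cr3 (p xa) (p ya) t))
     + Poly_Mapping.single 0 d2 * (Poly_Mapping.single 0 kc * lin (\<lambda>t. lc * cr3 (p xc) (p yc) t))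
     + Poly_Mapping.single 0 d3 * (Poly_Mapping.single 0 kd * lin (\<lambda>t. ld * cr3 (p xd) (p yd) t)) = 0"
proof -
  let ?u = "\<lambda>t. la * cr3 (p xa) (p ya) t" and ?v = "\<lambda>t. lc * cr3 (p xc) (p yc) t" and ?w = "\<lambda>t. ld * cr3 (p xd) (p yd) t"
  note nzc = nzc_gp[OF gp]
  have xa: "xa \<in> {1..4}" "ya \<in> {1..4}" "xa \<noteq> ya" using la(2) idx by (auto simp: doubleton_eq_iff)
  have xc: "xc \<in> {1..4}" "yc \<in> {1..4}" "xc \<noteq> yc" using lc(2) idx by (auto simp: doubleton_eq_iff)
  have xd: "xd \<in> {1..4}" "yd \<in> {1..4}" "xd \<noteq> yd" using ld(2) idx by (auto simp: doubleton_eq_iff)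
  have "\<exists>c1 c2 c3. c1 \<noteq> 0 \<and> (\<forall>t. t \<le> 2 \<longrightarrow> c1 * ?u t + c2 * ?v t + c3 * ?w t = 0)"
  proof (rule line3[where a="p a" and b="p b" and c="p c" and d="p d"])
    show "dt (p b) (p c) (p d) \<noteq> 0" using gpd[OF gp] idx by blast
    show "dot3 ?u (p a) = 0" "dot3 ?u (p b) = 0" using la(2) by (intro dot_cr; auto)+
    show "dot3 ?v (p b) = 0" "dot3 ?v (p c) = 0" using lc(2) by (intro dot_cr; auto)+
    show "dot3 ?w (p b) = 0" "dot3 ?w (p d) = 0" using ld(2) by (intro dot_cr; auto)+
    show "nz3 (cr3 (p a) (p b))" "nz3 (cr3 (p b) (p c))" "nz3 (cr3 (p b) (p d))" using nzc idx by auto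
    show "nz3 ?v" by (rule nz_scale[OF lc(1) nzc[OF xc]])
    show "nz3 ?w" by (rule nz_scale[OF ld(1) nzc[OF xd]])
  qed
  then obtain c1 c2 c3 where "c1 \<noteq> 0" "\<forall>t. t \<le> 2 \<longrightarrow> c1 * ?u t + c2 * ?v t + c3 * ?w t = 0" by blast
  then show ?thesis by (rule line_rel[OF ka kc kd])
qed


lemma m2_neq: "a \<noteq> c \<Longrightarrow> a \<noteq> d \<Longrightarrow> m2 a b \<noteq> m2 c d"
proof
  assume "a \<noteq> c" "a \<noteq> d" "m2 a b = m2 c d"
  then have "lk (m2 a b) a = lk (m2 c d) a" by simp
  then show False using \<open>a \<noteq> c\<close> \<open>a \<noteq> d\<close> unfolding lk_m2 by simp
qed

lemma part2:
  fixes p :: "nat \<Rightarrow> nat \<Rightarrow> 'k::field" and s :: "ev \<Rightarrow> 'k kxyz"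
  assumes gp: "general_position p" and sv: "\<forall>v\<in>all_vars. s v \<in> H0 p (vdeg v) \<and> s v \<noteq> 0"
  shows "(M4 :: 'k kE set) \<subseteq> init_ideal (Q4 s)"
proof -
  have sv1: "s v \<in> H0 p (vdeg v)" and sv2: "s v \<noteq> 0" for v using sv UNIV_ev by auto
  note nzc = nzc_gp[OF gp]
  obtain k1 where k1: "k1 \<noteq> 0" "s E1 = Poly_Mapping.single 0 k1" using secE[OF sv1[of E1] _ sv2] by auto
  obtain k2 where k2: "k2 \<noteq> 0" "s E2 = Poly_Mapping.single 0 k2" using secE[OF sv1[of E2] _ sv2] by auto
  obtain k3 where k3: "k3 \<noteq> 0" "s E3 = Poly_Mapping.single 0 k3" using secE[OF sv1[of E3] _ sv2] by auto
  obtain k4 where k4: "k4 \<noteq> 0" "s E4 = Poly_Mapping.single 0 k4" using secE[OF sv1[of E4] _ sv2] by auto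
  obtain l12 where l12: "l12 \<noteq> 0" "s F12 = lin (\<lambda>t. l12 * cr3 (p 1) (p 2) t)"
    using secF2[OF sv1[of F12] _ _ _ _ _ sv2 nzc[of 1 2]] by auto
  obtain l13 where l13: "l13 \<noteq> 0" "s F13 = lin (\<lambda>t. l13 * cr3 (p 1) (p 3) t)"
    using secF2[OF sv1[of F13] _ _ _ _ _ sv2 nzc[of 1 3]] by auto
  obtain l14 where l14: "l14 \<noteq> 0" "s F14 = lin (\<lambda>t. l14 * cr3 (p 1) (p 4) t)"
    using secF2[OF sv1[of F14] _ _ _ _ _ sv2 nzc[of 1 4]] by auto
  obtain l23 where l23: "l23 \<noteq> 0" "s F23 = lin (\<lambda>t. l23 * cr3 (p 2) (p 3) t)"
    using secF2[OF sv1[of F23] _ _ _ _ _ sv2 nzc[of 2 3]] by auto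
  obtain l24 where l24: "l24 \<noteq> 0" "s F24 = lin (\<lambda>t. l24 * cr3 (p 2) (p 4) t)"
    using secF2[OF sv1[of F24] _ _ _ _ _ sv2 nzc[of 2 4]] by auto
  obtain l34 where l34: "l34 \<noteq> 0" "s F34 = lin (\<lambda>t. l34 * cr3 (p 3) (p 4) t)"
    using secF2[OF sv1[of F34] _ _ _ _ _ sv2 nzc[of 3 4]] by auto
  have g5: "Poly_Mapping.single (m2 E1 F12) 1 \<in> init_ideal (Q4 s)"
  proof -
    obtain d1 d2 d3 where d: "d1 \<noteq> 0" "Poly_Mapping.single 0 d1 * (s E1 * s F12) + Poly_Mapping.single 0 d2 * (s E3 * s F23)
        + Poly_Mapping.single 0 d3 * (s E4 * s F24) = 0"
      using line_gen[OF gp, of 1 2 3 4 k1 k3 k4 l12 1 2 l23 2 3 l24 2 4] k1 k3 k4 l12 l23 l24 by auto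
    show ?thesis
      by (rule rel_init[where D="(1,0,-1,0,0)", OF _ _ _ _ _ _ _ _ _ _ _ _ d(1) d(2)])
        (simp_all add: lookup_add lookup_single conic_class_def inter_eq canK_def revlex_m2 m2_neq)
  qed
  have g4: "Poly_Mapping.single (m2 E2 F12) 1 \<in> init_ideal (Q4 s)"
  proof -
    obtain d1 d2 d3 where d: "d1 \<noteq> 0" "Poly_Mapping.single 0 d1 * (s E2 * s F12) + Poly_Mapping.single 0 d2 * (s E3 * s F13)
        + Poly_Mapping.single 0 d3 * (s E4 * s F14) = 0"
      using line_gen[OF gp, of 2 1 3 4 k2 k3 k4 l12 1 2 l13 1 3 l14 1 4] k2 k3 k4 l12 l13 l14 by auto
    show ?thesis
      by (rule rel_init[where D="(1,-1,0,0,0)", OF _ _ _ _ _ _ _ _ _ _ _ _ d(1) d(2)])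
        (simp_all add: lookup_add lookup_single conic_class_def inter_eq canK_def revlex_m2 m2_neq)
  qed
  have g3: "Poly_Mapping.single (m2 E1 F13) 1 \<in> init_ideal (Q4 s)"
  proof -
    obtain d1 d2 d3 where d: "d1 \<noteq> 0" "Poly_Mapping.single 0 d1 * (s E1 * s F13) + Poly_Mapping.single 0 d2 * (s E2 * s F23)
        + Poly_Mapping.single 0 d3 * (s E4 * s F34) = 0"
      using line_gen[OF gp, of 1 3 2 4 k1 k2 k4 l13 1 3 l23 2 3 l34 3 4] k1 k2 k4 l13 l23 l34 by auto
    show ?thesis
      by (rule rel_init[where D="(1,0,0,-1,0)", OF _ _ _ _ _ _ _ _ _ _ _ _ d(1) d(2)])
        (simp_all add: lookup_add lookup_single conic_class_def inter_eq canK_def revlex_m2 m2_neq)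
  qed
  have g2: "Poly_Mapping.single (m2 E1 F14) 1 \<in> init_ideal (Q4 s)"
  proof -
    obtain d1 d2 d3 where d: "d1 \<noteq> 0" "Poly_Mapping.single 0 d1 * (s E1 * s F14) + Poly_Mapping.single 0 d2 * (s E2 * s F24)
        + Poly_Mapping.single 0 d3 * (s E3 * s F34) = 0"
      using line_gen[OF gp, of 1 4 2 3 k1 k2 k3 l14 1 4 l24 2 4 l34 3 4] k1 k2 k3 l14 l24 l34 by auto
    show ?thesis
      by (rule rel_init[where D="(1,0,0,0,-1)", OF _ _ _ _ _ _ _ _ _ _ _ _ d(1) d(2)])
        (simp_all add: lookup_add lookup_single conic_class_def inter_eq canK_def revlex_m2 m2_neq)
  qed
  have g1: "Poly_Mapping.single (m2 F23 F14) 1 \<in> init_ideal (Q4 s)"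
  proof -
    obtain d1 d2 d3 where d: "d1 \<noteq> 0" "Poly_Mapping.single 0 d1 * (s F23 * s F14) + Poly_Mapping.single 0 d2 * (s F12 * s F34)
        + Poly_Mapping.single 0 d3 * (s F13 * s F24) = 0"
      unfolding l12(2) l34(2) l13(2) l24(2) l14(2) l23(2)
      by (rule exE[OF quad_rel[OF l12(1) l34(1) l13(1) l24(1) l14(1) l23(1)]]) auto
    show ?thesis
      by (rule rel_init[where D="(2,-1,-1,-1,-1)", OF _ _ _ _ _ _ _ _ _ _ _ _ d(1) d(2)])
        (simp_all add: lookup_add lookup_single conic_class_def inter_eq canK_def revlex_m2 m2_neq)
  qed
  have G: "(\<lambda>\<alpha>. Poly_Mapping.single \<alpha> 1) ` set M4_gens \<subseteq> init_ideal (Q4 s)"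
    unfolding M4_gens_def using g1 g2 g3 g4 g5 by auto
  show ?thesis
    unfolding M4_def ideal_gen_def
    using module.span_mono[OF module_times G] module.span_span[OF module_times]
    unfolding init_ideal_def ideal_gen_def by blast
qed


theorem mainTheorem18:
  fixes p :: "nat \<Rightarrow> nat \<Rightarrow> 'k::field"
    and s :: "ev \<Rightarrow> 'k kxyz"
  assumes "general_position p"
    and "\<forall>v\<in>all_vars. s v \<in> H0 p (vdeg v) \<and> s v \<noteq> 0"
  shows "(\<forall>\<alpha>\<in>set M4_gens. Poly_Mapping.lookup \<alpha> E4 = 0)
       \<and> (M4 :: 'k kE set) \<subseteq> init_ideal (Q4 s)
       \<and> (\<forall>g\<in>W4. \<forall>D. hilb_quot (M4 :: 'k kE set) (g D) = hilb_quot (M4 :: 'k kE set) D)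
       \<and> (\<forall>m::nat. \<exists>N::int. \<forall>a1 a2 a3 a4. N \<le> a1 \<and> N \<le> a2 \<and> N \<le> a3 \<and> N \<le> a4 \<longrightarrow>
            hilb_quot (M4 :: 'k kE set) (int m, a1, a2, a3, a4) = (m + 2) choose 2)"
proof (intro conjI)
  show "\<forall>\<alpha>\<in>set M4_gens. Poly_Mapping.lookup \<alpha> E4 = 0" by (rule part1)
  show "(M4 :: 'k kE set) \<subseteq> init_ideal (Q4 s)" by (rule part2[OF assms])
  show "\<forall>g\<in>W4. \<forall>D. hilb_quot (M4 :: 'k kE set) (g D) = hilb_quot (M4 :: 'k kE set) D"
    using part3 by blast
  show "\<forall>m::nat. \<exists>N::int. \<forall>a1 a2 a3 a4. N \<le> a1 \<and> N \<le> a2 \<and> N \<le> a3 \<and> N \<le> a4 \<longrightarrow>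
            hilb_quot (M4 :: 'k kE set) (int m, a1, a2, a3, a4) = (m + 2) choose 2"
    using part4 by blast
qed

end
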